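(* Let $(A,\Delta)$ be a regular multiplier Hopf algebra acting on an algebra $R$ (so $R$ is a left $A$-module algebra), and suppose the action is inner: there is a unital homomorphism $\gamma:A\to M(R)$ such that $ax=\sum\gamma(a_{(1)})\,x\,\gamma(S(a_{(2)}))$ for all $a\in A$, $x\in R$. Then the smash product $R\# A$ is isomorphic, as an algebra, to the tensor product algebra $R\otimes A$ (with the usual componentwise product).
   Context: Algebras are over $\mathbb C$, possibly without identity, with non-degenerate product; $M(\cdot)$ is the multiplier algebra. A regular multiplier Hopf algebra is a pair $(A,\Delta)$ with $\Delta:A\to M(A\otimes A)$ a coassociative homomorphism such that $\Delta(a)(1\otimes b),(a\otimes 1)\Delta(b),\Delta(a)(b\otimes 1),(1\otimes a)\Delta(b)\in A\otimes A$, the maps $a\otimes b\mapsto\Delta(a)(1\otimes b)$, $a\otimes b\mapsto(a\otimes 1)\Delta(b)$ are bijective, and likewise for the flipped comultiplication; it has counit $\varepsilon$ and bijective antipode $S$; Sweedler notation is used with legs covered. A left $A$-module algebra is an algebra $R$ with non-degenerate product which is a unital left $A$-module ($AR=R$) with $a(xx')=\sum(a_{(1)}x)(a_{(2)}x')$. A homomorphism $\gamma:A\to M(R)$ is unital if $\gamma(A)R=R\gamma(A)=R$ (spans of products); then each $x\in R$ equals $\gamma(e)x$ for some $e\in A$, which covers $a_{(1)}$ in the formula for innerness. The smash product $R\# A$ is $R\otimes A$ with product $(x\# a)(x'\# a')=\sum x(a_{(1)}x')\# a_{(2)}a'$. *)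

theory Defs
  imports Complex_Main
begin

class cvec = ab_group_add +
  fixes scaleC :: "complex \<Rightarrow> 'a \<Rightarrow> 'a"  (infixr \<open>*\<^sub>C\<close> 75)
  assumes scaleC_add_right: "c *\<^sub>C (x + y) = c *\<^sub>C x + c *\<^sub>C y"
    and scaleC_add_left: "(c + d) *\<^sub>C x = c *\<^sub>C x + d *\<^sub>C x"
    and scaleC_scaleC: "c *\<^sub>C (d *\<^sub>C x) = (c * d) *\<^sub>C x"
    and scaleC_one: "1 *\<^sub>C x = x"

text \<open>An associative algebra over the complex numbers, not necessarily with identity
  (the class ring of HOL does not require a unit).\<close>
class calg = cvec + ring +
  assumes scaleC_mult_left: "(c *\<^sub>C x) * y = c *\<^sub>C (x * y)"
    and scaleC_mult_right: "x * (c *\<^sub>C y) = c *\<^sub>C (x * y)"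

instantiation complex :: cvec
begin
definition scaleC_complex :: "complex \<Rightarrow> complex \<Rightarrow> complex" where
  "scaleC_complex c x = c * x"
instance by standard (auto simp: scaleC_complex_def algebra_simps)
end

definition clinear :: "('a::cvec \<Rightarrow> 'b::cvec) \<Rightarrow> bool" where
  "clinear f \<longleftrightarrow> (\<forall>x y. f (x + y) = f x + f y) \<and> (\<forall>c x. f (c *\<^sub>C x) = c *\<^sub>C f x)"

definition nondegenerate :: "('a \<Rightarrow> 'a \<Rightarrow> 'a::zero) \<Rightarrow> bool" where
  "nondegenerate mul \<longleftrightarrow>
     (\<forall>x. (\<forall>y. mul x y = 0) \<longrightarrow> x = 0) \<and> (\<forall>x. (\<forall>y. mul y x = 0) \<longrightarrow> x = 0)"

text \<open>Standard construction: formal finite linear combinations of pairs, modulo the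
  complex span of the bilinearity relations.\<close>

definition fv :: "(complex \<times> 'a \<times> 'b) list \<Rightarrow> ('a \<times> 'b) \<Rightarrow> complex" where
  "fv xs p = (\<Sum>(c, q)\<leftarrow>xs. if q = p then c else 0)"

definition ind :: "'a \<Rightarrow> 'a \<Rightarrow> complex" where
  "ind q p = (if p = q then 1 else 0)"

inductive trel :: "(('a::cvec \<times> 'b::cvec) \<Rightarrow> complex) \<Rightarrow> bool" where
  zero: "trel (\<lambda>_. 0)"
| add: "trel f \<Longrightarrow> trel g \<Longrightarrow> trel (\<lambda>p. f p + g p)"
| scale: "trel f \<Longrightarrow> trel (\<lambda>p. c * f p)"
| lin_left: "trel (\<lambda>p. ind (x + x', y) p - ind (x, y) p - ind (x', y) p)"
| lin_right: "trel (\<lambda>p. ind (x, y + y') p - ind (x, y) p - ind (x, y') p)"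
| hom_left: "trel (\<lambda>p. ind (c *\<^sub>C x, y) p - c * ind (x, y) p)"
| hom_right: "trel (\<lambda>p. ind (x, c *\<^sub>C y) p - c * ind (x, y) p)"

definition tequiv :: "(complex \<times> 'a::cvec \<times> 'b::cvec) list \<Rightarrow> (complex \<times> 'a \<times> 'b) list \<Rightarrow> bool" where
  "tequiv xs ys \<longleftrightarrow> trel (\<lambda>p. fv xs p - fv ys p)"

lemma trel_cong: "trel f \<Longrightarrow> f = g \<Longrightarrow> trel g" by simp

lemma fv_append: "fv (xs @ ys) p = fv xs p + fv ys p"
  by (simp add: fv_def)

lemma fv_Nil: "fv [] p = 0" by (simp add: fv_def)

lemma fv_scale: "fv (map (\<lambda>(d, q). (c * d, q)) xs) p = c * fv xs p"
  by (induction xs) (auto simp: fv_def algebra_simps)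

lemma fv_scale': "fv (map (\<lambda>(d, q). (d * c, q)) xs) p = c * fv xs p"
  by (induction xs) (auto simp: fv_def algebra_simps)

lemma fv_neg: "fv (map (\<lambda>(d, q). (- d, q)) xs) p = - fv xs p"
  by (induction xs) (auto simp: fv_def algebra_simps)

lemma fv_scale2: "fv (map (\<lambda>(d, q). (x * d + y * d, q)) xs) p = x * fv xs p + y * fv xs p"
  by (induction xs) (auto simp: fv_def algebra_simps)

lemma fv_scale3: "fv (map ((\<lambda>(d, q). (x * d, q)) \<circ> (\<lambda>(d, q). (y * d, q))) xs) p = x * y * fv xs p"
  by (induction xs) (auto simp: fv_def algebra_simps)

lemma tequiv_fv: "(\<And>p. fv xs p = fv ys p) \<Longrightarrow> tequiv xs ys"
  unfolding tequiv_def by (rule trel_cong[OF trel.zero]) auto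

lemma equivp_tequiv: "equivp tequiv"
proof (rule equivpI)
  show "reflp tequiv" by (auto intro: reflpI tequiv_fv)
  show "symp tequiv"
  proof (rule sympI)
    fix xs ys assume "tequiv xs ys"
    then have "trel (\<lambda>p. (-1) * (fv xs p - fv ys p))" unfolding tequiv_def by (rule trel.scale)
    then show "tequiv ys xs" unfolding tequiv_def by (rule trel_cong) auto
  qed
  show "transp tequiv"
  proof (rule transpI)
    fix xs ys zs assume "tequiv xs ys" "tequiv ys zs"
    then have "trel (\<lambda>p. (fv xs p - fv ys p) + (fv ys p - fv zs p))"
      unfolding tequiv_def by (rule trel.add)
    then show "tequiv xs zs" unfolding tequiv_def by (rule trel_cong) auto
  qed
qed

quotient_type (overloaded) ('a, 'b) tensor = "(complex \<times> 'a::cvec \<times> 'b::cvec) list" / tequiv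
  by (rule equivp_tequiv)

instantiation tensor :: (cvec, cvec) cvec
begin

lift_definition zero_tensor :: "('a, 'b) tensor" is "[]" .

lift_definition plus_tensor :: "('a, 'b) tensor \<Rightarrow> ('a, 'b) tensor \<Rightarrow> ('a, 'b) tensor"
  is "(@)"
proof -
  fix xs xs' ys ys' :: "(complex \<times> 'a \<times> 'b) list"
  assume "tequiv xs xs'" "tequiv ys ys'"
  then have "trel (\<lambda>p. (fv xs p - fv xs' p) + (fv ys p - fv ys' p))"
    unfolding tequiv_def by (rule trel.add)
  then show "tequiv (xs @ ys) (xs' @ ys')"
    unfolding tequiv_def by (rule trel_cong) (auto simp: fv_append)
qed

lift_definition scaleC_tensor :: "complex \<Rightarrow> ('a, 'b) tensor \<Rightarrow> ('a, 'b) tensor"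
  is "\<lambda>c. map (\<lambda>(d, q). (c * d, q))"
proof -
  fix c and xs xs' :: "(complex \<times> 'a \<times> 'b) list"
  assume "tequiv xs xs'"
  then have "trel (\<lambda>p. c * (fv xs p - fv xs' p))"
    unfolding tequiv_def by (rule trel.scale)
  then show "tequiv (map (\<lambda>(d, q). (c * d, q)) xs) (map (\<lambda>(d, q). (c * d, q)) xs')"
    unfolding tequiv_def by (rule trel_cong) (auto simp: fv_scale fv_scale' algebra_simps)
qed

definition uminus_tensor :: "('a, 'b) tensor \<Rightarrow> ('a, 'b) tensor" where
  "uminus_tensor t = (-1) *\<^sub>C t"

definition minus_tensor :: "('a, 'b) tensor \<Rightarrow> ('a, 'b) tensor \<Rightarrow> ('a, 'b) tensor" where
  "minus_tensor s t = s + (-1) *\<^sub>C t"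

instance
proof
  fix a b c :: "('a, 'b) tensor" and x y :: complex
  show "a + b + c = a + (b + c)"
    by transfer (rule tequiv_fv, simp add: fv_append)
  show "a + b = b + a"
    by transfer (rule tequiv_fv, simp add: fv_append)
  show "0 + a = a"
    by transfer (rule tequiv_fv, simp add: fv_append fv_Nil)
  show "- a + a = 0"
    unfolding uminus_tensor_def
    by transfer (rule tequiv_fv, simp add: fv_append fv_Nil fv_scale fv_scale' fv_neg)
  show "a - b = a + - b"
    unfolding uminus_tensor_def minus_tensor_def ..
  show "x *\<^sub>C (a + b) = x *\<^sub>C a + x *\<^sub>C b"
    by transfer (rule tequiv_fv, simp add: fv_append fv_scale)
  show "(x + y) *\<^sub>C a = x *\<^sub>C a + y *\<^sub>C a"
    by transfer (rule tequiv_fv, simp add: fv_append fv_scale fv_scale2 algebra_simps)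
  show "x *\<^sub>C (y *\<^sub>C a) = (x * y) *\<^sub>C a"
    by transfer (rule tequiv_fv, simp add: fv_scale3 fv_scale)
  show "1 *\<^sub>C a = a"
    by transfer (rule tequiv_fv, simp add: fv_scale)
qed

end

text \<open>The map
  \<open>tlift \<phi>\<close> sends \<open>x \<otimes> y\<close> to \<open>\<phi> x y\<close>; it is well defined whenever \<open>\<phi>\<close> is bilinear
  (it is computed on an arbitrary representative).\<close>

definition tens :: "'a::cvec \<Rightarrow> 'b::cvec \<Rightarrow> ('a, 'b) tensor"  (infixr \<open>\<otimes>\<close> 80) where
  "x \<otimes> y = abs_tensor [(1, x, y)]"

definition tlift :: "('a::cvec \<Rightarrow> 'b::cvec \<Rightarrow> 'c::cvec) \<Rightarrow> ('a, 'b) tensor \<Rightarrow> 'c" where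
  "tlift \<phi> t = (\<Sum>(c, x, y)\<leftarrow>rep_tensor t. c *\<^sub>C \<phi> x y)"

definition tmap :: "('a::cvec \<Rightarrow> 'c::cvec) \<Rightarrow> ('b::cvec \<Rightarrow> 'd::cvec) \<Rightarrow> ('a, 'b) tensor \<Rightarrow> ('c, 'd) tensor" where
  "tmap f g = tlift (\<lambda>x y. f x \<otimes> g y)"

definition tflip :: "('a::cvec, 'b::cvec) tensor \<Rightarrow> ('b, 'a) tensor" where
  "tflip = tlift (\<lambda>x y. y \<otimes> x)"

definition tmul :: "('a::calg, 'b::calg) tensor \<Rightarrow> ('a, 'b) tensor \<Rightarrow> ('a, 'b) tensor" where
  "tmul s t = tlift (\<lambda>x y. tlift (\<lambda>x' y'. (x * x') \<otimes> (y * y')) t) s"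

definition tassoc :: "('a::cvec, ('b::cvec, 'c::cvec) tensor) tensor \<Rightarrow> (('a, 'b) tensor, 'c) tensor" where
  "tassoc = tlift (\<lambda>x u. tlift (\<lambda>y z. (x \<otimes> y) \<otimes> z) u)"

text \<open>A multiplier of an algebra with product \<open>mul\<close> is a pair \<open>(L, R)\<close> of maps
  (left and right multiplication by the multiplier: \<open>L y = m y\<close>, \<open>R x = x m\<close>)
  with \<open>L (x y) = (L x) y\<close>, \<open>R (x y) = x (R y)\<close> and \<open>(R x) y = x (L y)\<close>
  (double centralizers).\<close>

type_synonym 'b mult = "('b \<Rightarrow> 'b) \<times> ('b \<Rightarrow> 'b)"

definition is_mult :: "('b \<Rightarrow> 'b \<Rightarrow> 'b) \<Rightarrow> 'b mult \<Rightarrow> bool" where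
  "is_mult mul m \<longleftrightarrow>
     (\<forall>x y. fst m (mul x y) = mul (fst m x) y) \<and>
     (\<forall>x y. snd m (mul x y) = mul x (snd m y)) \<and>
     (\<forall>x y. mul (snd m x) y = mul x (fst m y))"

definition mcomp :: "'b mult \<Rightarrow> 'b mult \<Rightarrow> 'b mult" where
  "mcomp m m' = (fst m \<circ> fst m', snd m' \<circ> snd m)"

definition madd :: "'b::plus mult \<Rightarrow> 'b mult \<Rightarrow> 'b mult" where
  "madd m m' = ((\<lambda>y. fst m y + fst m' y), (\<lambda>x. snd m x + snd m' x))"

definition mscale :: "complex \<Rightarrow> 'b::cvec mult \<Rightarrow> 'b mult" where
  "mscale c m = ((\<lambda>y. c *\<^sub>C fst m y), (\<lambda>x. c *\<^sub>C snd m x))"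

definition memb :: "('b \<Rightarrow> 'b \<Rightarrow> 'b) \<Rightarrow> 'b \<Rightarrow> 'b mult" where
  "memb mul b = (mul b, \<lambda>x. mul x b)"

definition in_alg :: "('b \<Rightarrow> 'b \<Rightarrow> 'b) \<Rightarrow> 'b mult \<Rightarrow> bool" where
  "in_alg mul m \<longleftrightarrow> (\<exists>t. m = memb mul t)"

definition the_elem :: "('b \<Rightarrow> 'b \<Rightarrow> 'b) \<Rightarrow> 'b mult \<Rightarrow> 'b" where
  "the_elem mul m = (THE t. m = memb mul t)"

definition hom_to_mult :: "('b \<Rightarrow> 'b \<Rightarrow> 'b) \<Rightarrow> ('a::calg \<Rightarrow> 'b::cvec mult) \<Rightarrow> bool" where
  "hom_to_mult mul h \<longleftrightarrow> (\<forall>a. is_mult mul (h a)) \<and>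
     (\<forall>a b. h (a + b) = madd (h a) (h b)) \<and> (\<forall>c a. h (c *\<^sub>C a) = mscale c (h a)) \<and>
     (\<forall>a b. h (a * b) = mcomp (h a) (h b))"

definition one_tens :: "'a::calg \<Rightarrow> ('a, 'a) tensor mult" where
  "one_tens b = (tmap id (\<lambda>y. b * y), tmap id (\<lambda>y. y * b))"

definition tens_one :: "'a::calg \<Rightarrow> ('a, 'a) tensor mult" where
  "tens_one b = (tmap (\<lambda>y. b * y) id, tmap (\<lambda>y. y * b) id)"

definition D1 :: "('a::calg \<Rightarrow> ('a, 'a) tensor mult) \<Rightarrow> 'a \<Rightarrow> 'a \<Rightarrow> ('a, 'a) tensor" where
  "D1 \<Delta> a b = the_elem tmul (mcomp (\<Delta> a) (one_tens b))"

definition D2 :: "('a::calg \<Rightarrow> ('a, 'a) tensor mult) \<Rightarrow> 'a \<Rightarrow> 'a \<Rightarrow> ('a, 'a) tensor" where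
  "D2 \<Delta> a b = the_elem tmul (mcomp (tens_one a) (\<Delta> b))"

definition D3 :: "('a::calg \<Rightarrow> ('a, 'a) tensor mult) \<Rightarrow> 'a \<Rightarrow> 'a \<Rightarrow> ('a, 'a) tensor" where
  "D3 \<Delta> a b = the_elem tmul (mcomp (\<Delta> a) (tens_one b))"

definition D4 :: "('a::calg \<Rightarrow> ('a, 'a) tensor mult) \<Rightarrow> 'a \<Rightarrow> 'a \<Rightarrow> ('a, 'a) tensor" where
  "D4 \<Delta> a b = the_elem tmul (mcomp (one_tens a) (\<Delta> b))"

definition regular_mult_hopf :: "('a::calg \<Rightarrow> ('a, 'a) tensor mult) \<Rightarrow> bool" where
  "regular_mult_hopf \<Delta> \<longleftrightarrow>
     nondegenerate ((*) :: 'a \<Rightarrow> 'a \<Rightarrow> 'a) \<and>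
     hom_to_mult tmul \<Delta> \<and>
     (\<forall>a b. in_alg tmul (mcomp (\<Delta> a) (one_tens b)) \<and> in_alg tmul (mcomp (tens_one a) (\<Delta> b)) \<and>
            in_alg tmul (mcomp (\<Delta> a) (tens_one b)) \<and> in_alg tmul (mcomp (one_tens a) (\<Delta> b))) \<and>
     \<comment> \<open>coassociativity \<open>(a \<otimes> 1 \<otimes> 1)(\<Delta> \<otimes> \<iota>)(\<Delta>(b)(1 \<otimes> c)) = (\<iota> \<otimes> \<Delta>)((a \<otimes> 1)\<Delta>(b))(1 \<otimes> 1 \<otimes> c)\<close>\<close>
     (\<forall>a b c. tlift (\<lambda>p q. D2 \<Delta> a p \<otimes> q) (D1 \<Delta> b c) =
              tassoc (tlift (\<lambda>u v. u \<otimes> D1 \<Delta> v c) (D2 \<Delta> a b))) \<and>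
     \<comment> \<open>\<open>a \<otimes> b \<mapsto> \<Delta>(a)(1 \<otimes> b)\<close> and \<open>a \<otimes> b \<mapsto> (a \<otimes> 1)\<Delta>(b)\<close> are bijective\<close>
     bij (tlift (D1 \<Delta>)) \<and> bij (tlift (D2 \<Delta>)) \<and>
     \<comment> \<open>likewise for the flipped comultiplication: \<open>\<Delta>\<^sup>o\<^sup>p(a)(1 \<otimes> b) = \<sigma>(\<Delta>(a)(b \<otimes> 1))\<close>,
         \<open>(a \<otimes> 1)\<Delta>\<^sup>o\<^sup>p(b) = \<sigma>((1 \<otimes> a)\<Delta>(b))\<close>\<close>
     bij (tlift (\<lambda>a b. tflip (D3 \<Delta> a b))) \<and> bij (tlift (\<lambda>a b. tflip (D4 \<Delta> a b)))"

definition is_counit :: "('a::calg \<Rightarrow> ('a, 'a) tensor mult) \<Rightarrow> ('a \<Rightarrow> complex) \<Rightarrow> bool" where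
  "is_counit \<Delta> \<epsilon> \<longleftrightarrow> clinear \<epsilon> \<and>
     (\<forall>a b. tlift (\<lambda>p q. \<epsilon> p *\<^sub>C q) (D1 \<Delta> a b) = a * b) \<and>
     (\<forall>a b. tlift (\<lambda>p q. \<epsilon> q *\<^sub>C p) (D2 \<Delta> a b) = a * b)"

definition is_antipode :: "('a::calg \<Rightarrow> ('a, 'a) tensor mult) \<Rightarrow> ('a \<Rightarrow> 'a) \<Rightarrow> bool" where
  "is_antipode \<Delta> S \<longleftrightarrow> clinear S \<and> (\<exists>\<epsilon>. is_counit \<Delta> \<epsilon> \<and>
     (\<forall>a b. tlift (\<lambda>p q. S p * q) (D1 \<Delta> a b) = \<epsilon> a *\<^sub>C b) \<and>
     (\<forall>a b. tlift (\<lambda>p q. p * S q) (D2 \<Delta> a b) = \<epsilon> b *\<^sub>C a))"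

definition module_algebra ::
  "('a::calg \<Rightarrow> ('a, 'a) tensor mult) \<Rightarrow> ('a \<Rightarrow> 'r::calg \<Rightarrow> 'r) \<Rightarrow> bool" where
  "module_algebra \<Delta> act \<longleftrightarrow>
     nondegenerate ((*) :: 'r \<Rightarrow> 'r \<Rightarrow> 'r) \<and>
     (\<forall>x. clinear (\<lambda>a. act a x)) \<and> (\<forall>a. clinear (act a)) \<and>
     (\<forall>a b x. act (a * b) x = act a (act b x)) \<and>
     \<comment> \<open>unital: \<open>AR = R\<close>\<close>
     (\<forall>x. \<exists>ps. x = (\<Sum>(a, y)\<leftarrow>ps. act a y)) \<and>
     \<comment> \<open>\<open>a((b y) x') = \<Sum> (a\<^sub>(\<^sub>1\<^sub>) b y)(a\<^sub>(\<^sub>2\<^sub>) x')\<close>, the leg \<open>a\<^sub>(\<^sub>1\<^sub>)\<close> covered by \<open>b\<close>\<close>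
     (\<forall>a b y x'. act a (act b y * x') = tlift (\<lambda>p q. act p y * act q x') (D3 \<Delta> a b))"

text \<open>A homomorphism \<open>\<gamma> : A \<rightarrow> M(R)\<close> is unital if \<open>\<gamma>(A)R = R\<gamma>(A) = R\<close> (spans).\<close>
definition unital_hom :: "('a::calg \<Rightarrow> 'r::calg mult) \<Rightarrow> bool" where
  "unital_hom \<gamma> \<longleftrightarrow> hom_to_mult (*) \<gamma> \<and>
     (\<forall>x. \<exists>ps. x = (\<Sum>(e, y)\<leftarrow>ps. fst (\<gamma> e) y)) \<and>
     (\<forall>x. \<exists>ps. x = (\<Sum>(e, y)\<leftarrow>ps. snd (\<gamma> e) y))"

text \<open>Innerness: \<open>a x = \<Sum> \<gamma>(a\<^sub>(\<^sub>1\<^sub>)) x \<gamma>(S(a\<^sub>(\<^sub>2\<^sub>)))\<close>, where \<open>a\<^sub>(\<^sub>1\<^sub>)\<close> is covered by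
  any \<open>e\<close> with \<open>\<gamma>(e)x = x\<close>, i.e. the right hand side is computed from \<open>\<Delta>(a)(e \<otimes> 1)\<close>.\<close>
definition inner_action ::
  "('a::calg \<Rightarrow> ('a, 'a) tensor mult) \<Rightarrow> ('a \<Rightarrow> 'a) \<Rightarrow> ('a \<Rightarrow> 'r::calg \<Rightarrow> 'r) \<Rightarrow> ('a \<Rightarrow> 'r mult) \<Rightarrow> bool" where
  "inner_action \<Delta> S act \<gamma> \<longleftrightarrow> unital_hom \<gamma> \<and>
     (\<forall>a e x. fst (\<gamma> e) x = x \<longrightarrow>
        act a x = tlift (\<lambda>p q. snd (\<gamma> (S q)) (fst (\<gamma> p) x)) (D3 \<Delta> a e))"

text \<open>Smash product on \<open>R \<otimes> A\<close>: \<open>(x # a)(x' # a') = \<Sum> x (a\<^sub>(\<^sub>1\<^sub>) x') # a\<^sub>(\<^sub>2\<^sub>) a'\<close>,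
  computed from \<open>\<Delta>(a)(1 \<otimes> a')\<close>.\<close>
definition smash_mul ::
  "('a::calg \<Rightarrow> ('a, 'a) tensor mult) \<Rightarrow> ('a \<Rightarrow> 'r::calg \<Rightarrow> 'r) \<Rightarrow>
   ('r, 'a) tensor \<Rightarrow> ('r, 'a) tensor \<Rightarrow> ('r, 'a) tensor" where
  "smash_mul \<Delta> act s t =
     tlift (\<lambda>x a. tlift (\<lambda>x' a'. tlift (\<lambda>p q. (x * act p x') \<otimes> q) (D1 \<Delta> a a')) t) s"

end

theory Submission
  imports Defs
begin

interpretation cv: vector_space "scaleC :: complex \<Rightarrow> 'a \<Rightarrow> 'a::cvec"
  by unfold_locales (auto simp: scaleC_add_right scaleC_add_left scaleC_scaleC scaleC_one)

lemma clinear_add: "clinear f \<Longrightarrow> f (x + y) = f x + f y" by (simp add: clinear_def)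
lemma clinear_scale: "clinear f \<Longrightarrow> f (c *\<^sub>C x) = c *\<^sub>C f x" by (simp add: clinear_def)
lemma clinear_zero: "clinear f \<Longrightarrow> f 0 = 0"
  using clinear_scale[of f 0 0] by (simp add: cv.scale_zero_left)
lemma clinear_minus: "clinear f \<Longrightarrow> f (- x) = - f x"
  using clinear_scale[of f "-1" x] by (simp add: cv.scale_minus_left)
lemma clinear_diff: "clinear f \<Longrightarrow> f (x - y) = f x - f y"
  using clinear_add[of f x "- y"] clinear_minus[of f y] by simp
lemma clinear_sum: assumes "clinear f" shows "f (sum g S) = (\<Sum>i\<in>S. f (g i))"
  by (induction S rule: infinite_finite_induct) (auto simp: clinear_zero[OF assms] clinear_add[OF assms])
lemma clinear_sum_list: assumes "clinear f" shows "f (sum_list (map g xs)) = sum_list (map (\<lambda>i. f (g i)) xs)"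
  by (induction xs) (auto simp: clinear_zero[OF assms] clinear_add[OF assms])

definition bil :: "('a::cvec \<Rightarrow> 'b::cvec \<Rightarrow> 'c::cvec) \<Rightarrow> bool" where
  "bil \<phi> \<longleftrightarrow> (\<forall>x. clinear (\<phi> x)) \<and> (\<forall>y. clinear (\<lambda>x. \<phi> x y))"

lemma bilI: "(\<And>x. clinear (\<phi> x)) \<Longrightarrow> (\<And>y. clinear (\<lambda>x. \<phi> x y)) \<Longrightarrow> bil \<phi>"
  by (simp add: bil_def)

section \<open>Well-definedness of tlift\<close>

definition supp :: "('p \<Rightarrow> complex) \<Rightarrow> 'p set" where "supp f = {p. f p \<noteq> 0}"

lemma sum_ind: assumes "finite S" "q \<in> S" shows "(\<Sum>p\<in>S. ind q p *\<^sub>C g p) = g q"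
proof -
  have "\<And>p. ind q p *\<^sub>C g p = (if p = q then g q else 0)"
    by (simp add: ind_def cv.scale_zero_left)
  then show ?thesis using assms by (simp add: sum.delta)
qed

lemma sum_ind3: assumes "finite S" "q1 \<in> S" "q2 \<in> S" "q3 \<in> S"
  shows "(\<Sum>p\<in>S. (ind q1 p - ind q2 p - ind q3 p) *\<^sub>C g p) = g q1 - g q2 - g q3"
proof -
  have "(\<Sum>p\<in>S. (ind q1 p - ind q2 p - ind q3 p) *\<^sub>C g p) =
     (\<Sum>p\<in>S. ind q1 p *\<^sub>C g p) - (\<Sum>p\<in>S. ind q2 p *\<^sub>C g p) - (\<Sum>p\<in>S. ind q3 p *\<^sub>C g p)"
    by (simp only: cv.scale_left_diff_distrib sum_subtractf)
  then show ?thesis by (simp only: sum_ind[OF assms(1,2)] sum_ind[OF assms(1,3)] sum_ind[OF assms(1,4)])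
qed

lemma sum_ind2: assumes "finite S" "q1 \<in> S" "q2 \<in> S"
  shows "(\<Sum>p\<in>S. (ind q1 p - c * ind q2 p) *\<^sub>C g p) = g q1 - c *\<^sub>C g q2"
proof -
  have "(\<Sum>p\<in>S. (ind q1 p - c * ind q2 p) *\<^sub>C g p) =
     (\<Sum>p\<in>S. ind q1 p *\<^sub>C g p) - c *\<^sub>C (\<Sum>p\<in>S. ind q2 p *\<^sub>C g p)"
    by (simp only: cv.scale_left_diff_distrib sum_subtractf cv.scale_sum_right scaleC_scaleC)
  then show ?thesis by (simp only: sum_ind[OF assms(1,2)] sum_ind[OF assms(1,3)])
qed

lemma sum_supp_ext:
  assumes "finite S'" "supp f \<subseteq> S'"
  shows "(\<Sum>p\<in>S'. f p *\<^sub>C g p) = (\<Sum>p\<in>supp f. f p *\<^sub>C g p)"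
proof (rule sum.mono_neutral_right[OF assms])
  show "\<forall>i\<in>S' - supp f. f i *\<^sub>C g i = 0"
    by (simp add: supp_def cv.scale_zero_left)
qed

lemma trel_case:
  assumes "(\<Sum>p\<in>S. f p *\<^sub>C g p) = 0" "finite S" "supp f \<subseteq> S"
  shows "finite (supp f) \<and> (\<Sum>p\<in>supp f. f p *\<^sub>C g p) = 0"
  using assms sum_supp_ext[OF assms(2,3), of g] finite_subset by metis

lemma trel_sum:
  fixes \<phi> :: "'a::cvec \<Rightarrow> 'b::cvec \<Rightarrow> 'c::cvec"
  assumes "trel f" and b: "bil \<phi>"
  shows "finite (supp f) \<and> (\<Sum>p\<in>supp f. f p *\<^sub>C \<phi> (fst p) (snd p)) = 0"
  using assms(1)
proof (induction rule: trel.induct)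
  case zero
  then show ?case by (simp add: supp_def)
next
  case (add f g)
  let ?S = "supp f \<union> supp g"
  have fin: "finite ?S" using add by auto
  have s: "supp (\<lambda>p. f p + g p) \<subseteq> ?S" by (auto simp: supp_def)
  have "(\<Sum>p\<in>?S. (f p + g p) *\<^sub>C \<phi> (fst p) (snd p)) = (\<Sum>p\<in>?S. f p *\<^sub>C \<phi> (fst p) (snd p)) + (\<Sum>p\<in>?S. g p *\<^sub>C \<phi> (fst p) (snd p))"
    by (simp only: cv.scale_left_distrib sum.distrib)
  also have "\<dots> = 0"
    using add.IH sum_supp_ext[OF fin, of f "\<lambda>p. \<phi> (fst p) (snd p)"]
      sum_supp_ext[OF fin, of g "\<lambda>p. \<phi> (fst p) (snd p)"] by simp
  finally show ?case by (rule trel_case[OF _ fin s])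
next
  case (scale f c)
  have s: "supp (\<lambda>p. c * f p) \<subseteq> supp f" by (auto simp: supp_def)
  have fin: "finite (supp f)" using scale.IH by simp
  have "(\<Sum>p\<in>supp f. (c * f p) *\<^sub>C \<phi> (fst p) (snd p)) = c *\<^sub>C (\<Sum>p\<in>supp f. f p *\<^sub>C \<phi> (fst p) (snd p))"
    by (simp only: cv.scale_sum_right scaleC_scaleC)
  also have "\<dots> = 0" using scale.IH by (simp only: cv.scale_zero_right)
  finally show ?case by (rule trel_case[OF _ fin s])
next
  case (lin_left x x' y)
  have "(\<Sum>p\<in>{(x + x', y), (x, y), (x', y)}. (ind (x + x', y) p - ind (x, y) p - ind (x', y) p) *\<^sub>C \<phi> (fst p) (snd p))
     = \<phi> (x + x') y - \<phi> x y - \<phi> x' y"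
    using sum_ind3[of "{(x + x', y), (x, y), (x', y)}" "(x + x', y)" "(x, y)" "(x', y)" "\<lambda>p. \<phi> (fst p) (snd p)"] by simp
  also have "\<dots> = 0" using b by (simp add: bil_def clinear_def)
  finally show ?case by (rule trel_case) (auto simp: supp_def ind_def)
next
  case (lin_right x y y')
  have "(\<Sum>p\<in>{(x, y + y'), (x, y), (x, y')}. (ind (x, y + y') p - ind (x, y) p - ind (x, y') p) *\<^sub>C \<phi> (fst p) (snd p))
     = \<phi> x (y + y') - \<phi> x y - \<phi> x y'"
    using sum_ind3[of "{(x, y + y'), (x, y), (x, y')}" "(x, y + y')" "(x, y)" "(x, y')" "\<lambda>p. \<phi> (fst p) (snd p)"] by simp
  also have "\<dots> = 0" using b by (simp add: bil_def clinear_def)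
  finally show ?case by (rule trel_case) (auto simp: supp_def ind_def)
next
  case (hom_left c x y)
  have "(\<Sum>p\<in>{(c *\<^sub>C x, y), (x, y)}. (ind (c *\<^sub>C x, y) p - c * ind (x, y) p) *\<^sub>C \<phi> (fst p) (snd p))
     = \<phi> (c *\<^sub>C x) y - c *\<^sub>C \<phi> x y"
    using sum_ind2[of "{(c *\<^sub>C x, y), (x, y)}" "(c *\<^sub>C x, y)" "(x, y)" c "\<lambda>p. \<phi> (fst p) (snd p)"] by simp
  also have "\<dots> = 0" using b by (simp add: bil_def clinear_def)
  finally show ?case by (rule trel_case) (auto simp: supp_def ind_def)
next
  case (hom_right x c y)
  have "(\<Sum>p\<in>{(x, c *\<^sub>C y), (x, y)}. (ind (x, c *\<^sub>C y) p - c * ind (x, y) p) *\<^sub>C \<phi> (fst p) (snd p))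
     = \<phi> x (c *\<^sub>C y) - c *\<^sub>C \<phi> x y"
    using sum_ind2[of "{(x, c *\<^sub>C y), (x, y)}" "(x, c *\<^sub>C y)" "(x, y)" c "\<lambda>p. \<phi> (fst p) (snd p)"] by simp
  also have "\<dots> = 0" using b by (simp add: bil_def clinear_def)
  finally show ?case by (rule trel_case) (auto simp: supp_def ind_def)
qed

lemma list_sum_fv:
  assumes "finite S" "snd ` set xs \<subseteq> S"
  shows "(\<Sum>(c, x, y)\<leftarrow>xs. c *\<^sub>C \<phi> x y) = (\<Sum>p\<in>S. fv xs p *\<^sub>C \<phi> (fst p) (snd p))"
  using assms(2)
proof (induction xs)
  case Nil
  then show ?case by (simp add: fv_def cv.scale_zero_left)
next
  case (Cons a xs)
  obtain c x y where a: "a = (c, x, y)" by (cases a) auto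
  have fv: "fv ((c, x, y) # xs) p = (if (x, y) = p then c else 0) + fv xs p" for p
    by (simp add: fv_def)
  have xyS: "(x, y) \<in> S" using Cons.prems a by auto
  have e1: "\<And>p. (if (x, y) = p then c else 0) *\<^sub>C \<phi> (fst p) (snd p) = (if (x, y) = p then c *\<^sub>C \<phi> x y else 0)"
    by (auto simp: cv.scale_zero_left)
  have e2: "(\<Sum>p\<in>S. (if (x, y) = p then c else 0) *\<^sub>C \<phi> (fst p) (snd p)) = c *\<^sub>C \<phi> x y"
    unfolding e1 using assms(1) xyS by (simp add: sum.delta)
  have "(\<Sum>p\<in>S. fv (a # xs) p *\<^sub>C \<phi> (fst p) (snd p))
     = (\<Sum>p\<in>S. (if (x, y) = p then c else 0) *\<^sub>C \<phi> (fst p) (snd p)) + (\<Sum>p\<in>S. fv xs p *\<^sub>C \<phi> (fst p) (snd p))"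
    unfolding a fv by (simp only: cv.scale_left_distrib sum.distrib)
  also have "\<dots> = c *\<^sub>C \<phi> x y + (\<Sum>(c, x, y)\<leftarrow>xs. c *\<^sub>C \<phi> x y)"
    using e2 Cons by simp
  also have "\<dots> = (\<Sum>(c, x, y)\<leftarrow>a # xs. c *\<^sub>C \<phi> x y)" by (simp add: a)
  finally show ?case by simp
qed

lemma fvz: "p \<notin> snd ` set zs \<Longrightarrow> fv zs p = 0"
  by (induction zs) (auto simp: fv_def)


lemma tequiv_sum:
  assumes "tequiv xs ys" "bil \<phi>"
  shows "(\<Sum>(c, x, y)\<leftarrow>xs. c *\<^sub>C \<phi> x y) = (\<Sum>(c, x, y)\<leftarrow>ys. c *\<^sub>C \<phi> x y)"
proof -
  define S where "S = snd ` set xs \<union> snd ` set ys"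
  define f where "f = (\<lambda>p. fv xs p - fv ys p)"
  define g where "g = (\<lambda>p. \<phi> (fst p) (snd p))"
  have fin: "finite S" by (simp add: S_def)
  have t: "trel f" using assms(1) by (simp add: tequiv_def f_def)
  have s: "supp f \<subseteq> S"
  proof
    fix p assume p: "p \<in> supp f"
    show "p \<in> S"
    proof (rule ccontr)
      assume "p \<notin> S"
      then have "fv xs p = 0" "fv ys p = 0" using fvz[of p xs] fvz[of p ys] by (auto simp: S_def)
      with p show False by (simp add: supp_def f_def)
    qed
  qed
  have 1: "(\<Sum>(c, x, y)\<leftarrow>xs. c *\<^sub>C \<phi> x y) = (\<Sum>p\<in>S. fv xs p *\<^sub>C g p)"
    unfolding g_def by (rule list_sum_fv[OF fin]) (auto simp: S_def)
  have 2: "(\<Sum>(c, x, y)\<leftarrow>ys. c *\<^sub>C \<phi> x y) = (\<Sum>p\<in>S. fv ys p *\<^sub>C g p)"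
    unfolding g_def by (rule list_sum_fv[OF fin]) (auto simp: S_def)
  have 3: "(\<Sum>p\<in>S. fv xs p *\<^sub>C g p) - (\<Sum>p\<in>S. fv ys p *\<^sub>C g p) = (\<Sum>p\<in>S. f p *\<^sub>C g p)"
    by (simp add: f_def cv.scale_left_diff_distrib sum_subtractf)
  have 4: "(\<Sum>p\<in>S. f p *\<^sub>C g p) = (\<Sum>p\<in>supp f. f p *\<^sub>C g p)"
    by (rule sum_supp_ext[OF fin s])
  have 5: "(\<Sum>p\<in>supp f. f p *\<^sub>C g p) = 0"
    using trel_sum[OF t assms(2)] by (simp add: g_def)
  show ?thesis using 1 2 3 4 5 by simp
qed

lemma tlift_abs:
  assumes "bil \<phi>"
  shows "tlift \<phi> (abs_tensor xs) = (\<Sum>(c, x, y)\<leftarrow>xs. c *\<^sub>C \<phi> x y)"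
proof -
  have "tequiv (rep_tensor (abs_tensor xs)) xs"
    by (metis Quotient3_abs_rep Quotient3_tensor tensor.abs_eq_iff)
  then show ?thesis unfolding tlift_def by (rule tequiv_sum[OF _ assms])
qed


lemma abs_rep_tensor: "abs_tensor (rep_tensor t) = t"
  by (rule Quotient3_abs_rep[OF Quotient3_tensor])

lemma clinearI: "(\<And>x y. f (x + y) = f x + f y) \<Longrightarrow> (\<And>c x. f (c *\<^sub>C x) = c *\<^sub>C f x) \<Longrightarrow> clinear f"
  by (simp add: clinear_def)

lemma tlift_add:
  assumes "bil \<phi>" shows "tlift \<phi> (s + t) = tlift \<phi> s + tlift \<phi> t"
proof -
  have "s + t = abs_tensor (rep_tensor s @ rep_tensor t)"
    by (metis abs_rep_tensor plus_tensor.abs_eq)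
  then show ?thesis
    by (metis (no_types, lifting) abs_rep_tensor assms map_append sum_list_append tlift_abs)
qed

lemma sum_list_scale_map:
  "(\<Sum>(c, x, y)\<leftarrow>map (\<lambda>(d, q). (a * d, q)) xs. c *\<^sub>C \<phi> x y) = a *\<^sub>C (\<Sum>(c, x, y)\<leftarrow>xs. c *\<^sub>C \<phi> x y)"
  by (induction xs) (auto simp: cv.scale_zero_right cv.scale_right_distrib scaleC_scaleC)

lemma tlift_scale:
  assumes "bil \<phi>" shows "tlift \<phi> (a *\<^sub>C t) = a *\<^sub>C tlift \<phi> t"
proof -
  have "a *\<^sub>C t = abs_tensor (map (\<lambda>(d, q). (a * d, q)) (rep_tensor t))"
    by (metis abs_rep_tensor scaleC_tensor.abs_eq)
  then show ?thesis
    by (metis abs_rep_tensor assms sum_list_scale_map tlift_abs)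
qed

lemma clinear_tlift: "bil \<phi> \<Longrightarrow> clinear (tlift \<phi>)"
  by (simp add: clinearI tlift_add tlift_scale)

lemma tlift_zero: "bil \<phi> \<Longrightarrow> tlift \<phi> 0 = 0"
  using tlift_scale[of \<phi> 0 0] by (simp add: cv.scale_zero_left)

lemma tlift_tens: "bil \<phi> \<Longrightarrow> tlift \<phi> (x \<otimes> y) = \<phi> x y"
  by (simp add: tens_def tlift_abs scaleC_one)

text \<open>Linearity in the function argument (no well-definedness needed).\<close>

lemma list_fun_add: "(\<Sum>(c, x, y)\<leftarrow>xs. c *\<^sub>C (\<phi> x y + \<psi> x y)) = (\<Sum>(c, x, y)\<leftarrow>xs. c *\<^sub>C \<phi> x y) + (\<Sum>(c, x, y)\<leftarrow>xs. c *\<^sub>C \<psi> x y)"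
  by (induction xs) (auto simp: cv.scale_right_distrib)

lemma list_fun_scale: "(\<Sum>(c, x, y)\<leftarrow>xs. c *\<^sub>C (a *\<^sub>C \<phi> x y)) = a *\<^sub>C (\<Sum>(c, x, y)\<leftarrow>xs. c *\<^sub>C \<phi> x y)"
  by (induction xs) (auto simp: cv.scale_right_distrib scaleC_scaleC mult.commute cv.scale_zero_right)

lemma list_fun_zero: "(\<Sum>(c, x, y)\<leftarrow>xs. c *\<^sub>C (0::'a::cvec)) = 0"
  by (induction xs) (auto simp: cv.scale_zero_right)

lemma list_fun_linear: assumes "clinear L"
  shows "L (\<Sum>(c, x, y)\<leftarrow>xs. c *\<^sub>C \<phi> x y) = (\<Sum>(c, x, y)\<leftarrow>xs. c *\<^sub>C L (\<phi> x y))"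
  by (induction xs) (auto simp: clinear_zero[OF assms] clinear_add[OF assms] clinear_scale[OF assms])

lemma tlift_fun_add: "tlift (\<lambda>x y. \<phi> x y + \<psi> x y) t = tlift \<phi> t + tlift \<psi> t"
  unfolding tlift_def by (rule list_fun_add)

lemma tlift_fun_scale: "tlift (\<lambda>x y. a *\<^sub>C \<phi> x y) t = a *\<^sub>C tlift \<phi> t"
  unfolding tlift_def by (rule list_fun_scale)

lemma tlift_fun_zero: "tlift (\<lambda>x y. 0) t = 0"
  unfolding tlift_def by (rule list_fun_zero)

lemma tlift_fun_linear: "clinear L \<Longrightarrow> L (tlift \<phi> t) = tlift (\<lambda>x y. L (\<phi> x y)) t"
  unfolding tlift_def by (rule list_fun_linear)

lemma sum_list_swap:
  "(\<Sum>a\<leftarrow>xs. (\<Sum>b\<leftarrow>ys. f a b :: 'c::comm_monoid_add)) = (\<Sum>b\<leftarrow>ys. \<Sum>a\<leftarrow>xs. f a b)"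
  by (induction xs) (auto simp: sum_list_addf)

lemma scale_sum_list: "c *\<^sub>C (\<Sum>a\<leftarrow>xs. f a) = (\<Sum>a\<leftarrow>xs. c *\<^sub>C f a)"
  by (induction xs) (auto simp: cv.scale_right_distrib cv.scale_zero_right)

lemma tlift_swap:
  "tlift (\<lambda>x y. tlift (H x y) s) t = tlift (\<lambda>u v. tlift (\<lambda>x y. H x y u v) t) s"
  unfolding tlift_def
  by (simp add: scale_sum_list split_def scaleC_scaleC mult.commute sum_list_swap[where xs="rep_tensor t"])


lemma fv_single: "fv [(c, q)] p = (if q = p then c else 0)"
  by (simp add: fv_def)
lemma fv_two: "fv [(c, q), (d, r)] p = (if q = p then c else 0) + (if r = p then d else 0)"
  by (simp add: fv_def)

lemma tens_add_left: "(x + x') \<otimes> y = x \<otimes> y + x' \<otimes> y"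
proof -
  have "tequiv [(1, x + x', y)] [(1, x, y), (1, x', y)]"
    unfolding tequiv_def
    by (rule trel_cong[OF trel.lin_left[of x x' y]]) (auto simp: fv_single fv_two ind_def fun_eq_iff)
  then show ?thesis
    by (simp add: tens_def plus_tensor.abs_eq tensor.abs_eq_iff)
qed

lemma tens_add_right: "x \<otimes> (y + y') = x \<otimes> y + x \<otimes> y'"
proof -
  have "tequiv [(1, x, y + y')] [(1, x, y), (1, x, y')]"
    unfolding tequiv_def
    by (rule trel_cong[OF trel.lin_right[of x y y']]) (auto simp: fv_single fv_two ind_def fun_eq_iff)
  then show ?thesis
    by (simp add: tens_def plus_tensor.abs_eq tensor.abs_eq_iff)
qed

lemma tens_scale_left: "(c *\<^sub>C x) \<otimes> y = c *\<^sub>C (x \<otimes> y)"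
proof -
  have "tequiv [(1, c *\<^sub>C x, y)] [(c, x, y)]"
    unfolding tequiv_def
    by (rule trel_cong[OF trel.hom_left[of c x y]]) (auto simp: fv_single ind_def fun_eq_iff)
  then show ?thesis
    by (simp add: tens_def scaleC_tensor.abs_eq tensor.abs_eq_iff)
qed

lemma tens_scale_right: "x \<otimes> (c *\<^sub>C y) = c *\<^sub>C (x \<otimes> y)"
proof -
  have "tequiv [(1, x, c *\<^sub>C y)] [(c, x, y)]"
    unfolding tequiv_def
    by (rule trel_cong[OF trel.hom_right[of x c y]]) (auto simp: fv_single ind_def fun_eq_iff)
  then show ?thesis
    by (simp add: tens_def scaleC_tensor.abs_eq tensor.abs_eq_iff)
qed

lemma clinear_tens_left: "clinear (\<lambda>x. x \<otimes> y)"
  by (simp add: clinearI tens_add_left tens_scale_left)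
lemma clinear_tens_right: "clinear (\<lambda>y. x \<otimes> y)"
  by (simp add: clinearI tens_add_right tens_scale_right)

lemma tens_zero_left: "0 \<otimes> y = 0"
  by (rule clinear_zero[OF clinear_tens_left])
lemma tens_zero_right: "x \<otimes> 0 = 0"
  by (rule clinear_zero[OF clinear_tens_right])

lemma abs_tensor_sum: "abs_tensor xs = (\<Sum>(c, x, y)\<leftarrow>xs. c *\<^sub>C (x \<otimes> y))"
proof (induction xs)
  case Nil
  then show ?case by (simp add: zero_tensor.abs_eq)
next
  case (Cons a xs)
  obtain c x y where a: "a = (c, x, y)" by (cases a) auto
  have "abs_tensor (a # xs) = abs_tensor [a] + abs_tensor xs"
    by (simp add: plus_tensor.abs_eq)
  moreover have "abs_tensor [a] = c *\<^sub>C (x \<otimes> y)"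
    by (simp add: a tens_def scaleC_tensor.abs_eq)
  ultimately show ?case using Cons by (simp add: a)
qed

lemma tensor_induct[case_names zero tens add]:
  assumes "P 0" "\<And>x y. P (x \<otimes> y)" "\<And>s t. P s \<Longrightarrow> P t \<Longrightarrow> P (s + t)"
  shows "P t"
proof -
  have "P (\<Sum>(c, x, y)\<leftarrow>xs. c *\<^sub>C (x \<otimes> y))" for xs
    by (induction xs) (auto simp: assms tens_scale_left[symmetric])
  then show ?thesis using abs_tensor_sum[of "rep_tensor t"] abs_rep_tensor[of t] by metis
qed

lemma lin_ext:
  assumes "clinear L" "clinear M" "\<And>x y. L (x \<otimes> y) = M (x \<otimes> y)"
  shows "L t = M t"
  by (induction t rule: tensor_induct)
     (auto simp: assms clinear_zero[OF assms(1)] clinear_zero[OF assms(2)]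
        clinear_add[OF assms(1)] clinear_add[OF assms(2)])

lemma bil_tens: "bil (\<otimes>)"
  by (simp add: bilI clinear_tens_left clinear_tens_right)


lemma lin_id: "clinear (\<lambda>x. x)" by (simp add: clinearI)
lemma lin_zero: "clinear (\<lambda>x. 0)" by (simp add: clinearI cv.scale_zero_right)
lemma lin_add: "clinear f \<Longrightarrow> clinear g \<Longrightarrow> clinear (\<lambda>x. f x + g x)"
  by (rule clinearI) (simp_all add: clinear_add clinear_scale cv.scale_right_distrib)
lemma lin_diff: "clinear f \<Longrightarrow> clinear g \<Longrightarrow> clinear (\<lambda>x. f x - g x)"
  by (rule clinearI) (simp_all add: clinear_add clinear_scale cv.scale_right_diff_distrib)
lemma lin_scale: "clinear f \<Longrightarrow> clinear (\<lambda>x. c *\<^sub>C f x)"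
  by (rule clinearI) (simp_all add: clinear_add clinear_scale cv.scale_right_distrib scaleC_scaleC mult.commute)
lemma lin_comp: "clinear f \<Longrightarrow> clinear g \<Longrightarrow> clinear (\<lambda>x. f (g x))"
  by (rule clinearI) (simp_all add: clinear_add clinear_scale)
lemma lin_tens_l: "clinear f \<Longrightarrow> clinear (\<lambda>x. f x \<otimes> y)"
  by (rule clinearI) (simp_all add: clinear_add clinear_scale tens_add_left tens_scale_left)
lemma lin_tens_r: "clinear g \<Longrightarrow> clinear (\<lambda>x. y \<otimes> g x)"
  by (rule clinearI) (simp_all add: clinear_add clinear_scale tens_add_right tens_scale_right)
lemma lin_tlift_arg: "bil \<phi> \<Longrightarrow> clinear f \<Longrightarrow> clinear (\<lambda>x. tlift \<phi> (f x))"
  by (rule clinearI) (simp_all add: clinear_add clinear_scale tlift_add tlift_scale)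
lemma lin_tlift_fun: assumes "\<And>u v. clinear (\<lambda>x. \<phi> x u v)" shows "clinear (\<lambda>x. tlift (\<phi> x) t)"
proof (rule clinearI)
  fix x y
  have "\<phi> (x + y) = (\<lambda>u v. \<phi> x u v + \<phi> y u v)"
    using clinear_add[OF assms] by (intro ext) simp
  then show "tlift (\<phi> (x + y)) t = tlift (\<phi> x) t + tlift (\<phi> y) t" by (simp add: tlift_fun_add)
next
  fix c x
  have "\<phi> (c *\<^sub>C x) = (\<lambda>u v. c *\<^sub>C \<phi> x u v)"
    using clinear_scale[OF assms] by (intro ext) simp
  then show "tlift (\<phi> (c *\<^sub>C x)) t = c *\<^sub>C tlift (\<phi> x) t" by (simp add: tlift_fun_scale)
qed
lemma lin_mult_l: "clinear f \<Longrightarrow> clinear (\<lambda>x. f x * (a::'a::calg))"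
  by (rule clinearI) (simp_all add: clinear_add clinear_scale distrib_right scaleC_mult_left)
lemma lin_mult_r: "clinear f \<Longrightarrow> clinear (\<lambda>x. (a::'a::calg) * f x)"
  by (rule clinearI) (simp_all add: clinear_add clinear_scale distrib_left scaleC_mult_right)
lemma lin_cscale: "clinear (f :: 'a::cvec \<Rightarrow> complex) \<Longrightarrow> clinear (\<lambda>x. f x *\<^sub>C v)"
  by (rule clinearI) (simp_all add: clinear_add clinear_scale cv.scale_left_distrib scaleC_complex_def scaleC_scaleC)
lemma lin_cscale_r: "clinear g \<Longrightarrow> clinear (\<lambda>x. (c::complex) *\<^sub>C g x)"
  by (rule lin_scale)

lemma bil_tlift_clinear: "bil \<phi> \<Longrightarrow> clinear (tlift \<phi>)"
  by (rule clinear_tlift)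

lemma tlift_bil_lemma: "bil \<phi> \<Longrightarrow> clinear (\<lambda>t. tlift \<phi> t)"
  by (rule clinear_tlift)

lemma bil_tmap: "clinear f \<Longrightarrow> clinear g \<Longrightarrow> bil (\<lambda>x y. f x \<otimes> g y)"
  by (intro bilI lin_tens_l lin_tens_r)

lemma tmap_tens: "clinear f \<Longrightarrow> clinear g \<Longrightarrow> tmap f g (x \<otimes> y) = f x \<otimes> g y"
  by (simp add: tmap_def tlift_tens bil_tmap)

lemma clinear_tmap: "clinear f \<Longrightarrow> clinear g \<Longrightarrow> clinear (tmap f g)"
  unfolding tmap_def by (rule clinear_tlift[OF bil_tmap])

definition sl1 :: "('a::cvec \<Rightarrow> complex) \<Rightarrow> ('a, 'b::cvec) tensor \<Rightarrow> 'b" where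
  "sl1 f = tlift (\<lambda>x y. f x *\<^sub>C y)"
definition sl2 :: "('b::cvec \<Rightarrow> complex) \<Rightarrow> ('a::cvec, 'b) tensor \<Rightarrow> 'a" where
  "sl2 g = tlift (\<lambda>x y. g y *\<^sub>C x)"

lemma bil_sl1: "clinear f \<Longrightarrow> bil (\<lambda>x y. f x *\<^sub>C y)"
  by (intro bilI lin_scale lin_id lin_cscale)
lemma bil_sl2: "clinear g \<Longrightarrow> bil (\<lambda>x y. g y *\<^sub>C x)"
  by (intro bilI lin_scale lin_id lin_cscale)

lemma sl1_tens: "clinear f \<Longrightarrow> sl1 f (x \<otimes> y) = f x *\<^sub>C y"
  by (simp add: sl1_def tlift_tens bil_sl1)
lemma sl2_tens: "clinear g \<Longrightarrow> sl2 g (x \<otimes> y) = g y *\<^sub>C x"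
  by (simp add: sl2_def tlift_tens bil_sl2)
lemma clinear_sl1: "clinear f \<Longrightarrow> clinear (sl1 f)"
  by (simp add: sl1_def clinear_tlift bil_sl1)
lemma clinear_sl2: "clinear g \<Longrightarrow> clinear (sl2 g)"
  by (simp add: sl2_def clinear_tlift bil_sl2)

definition cbasis :: "'a::cvec set" where "cbasis = cv.extend_basis {}"
definition coord :: "'a::cvec \<Rightarrow> 'a \<Rightarrow> complex" where
  "coord b v = cv.representation cbasis v b"

lemma cbasis_indep: "cv.independent cbasis"
  unfolding cbasis_def by (rule cv.independent_extend_basis) (simp add: cv.independent_empty)
lemma cbasis_span: "cv.span cbasis = UNIV"
  unfolding cbasis_def by (rule cv.span_extend_basis) (simp add: cv.independent_empty)

lemma clinear_coord: "clinear (coord b)"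
  unfolding coord_def
  by (rule clinearI) (simp_all add: cv.representation_add[OF cbasis_indep] cv.representation_scale[OF cbasis_indep]
      cbasis_span scaleC_complex_def)

lemma finite_coord: "finite {b. coord b v \<noteq> 0}"
  unfolding coord_def by (rule cv.finite_representation)

lemma coord_expand:
  assumes "finite F" "{b. coord b v \<noteq> 0} \<subseteq> F"
  shows "(\<Sum>b\<in>F. coord b v *\<^sub>C b) = v"
proof -
  have "(\<Sum>b\<in>F. coord b v *\<^sub>C b) = (\<Sum>b\<in>{b. coord b v \<noteq> 0}. coord b v *\<^sub>C b)"
    using assms by (intro sum.mono_neutral_right) (auto simp: cv.scale_zero_left)
  also have "\<dots> = v"
    unfolding coord_def by (rule cv.sum_nonzero_representation_eq[OF cbasis_indep]) (simp add: cbasis_span)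
  finally show ?thesis .
qed

lemma coord_sep: "(\<And>b. coord b v = 0) \<Longrightarrow> v = 0"
  using coord_expand[of "{}" v] by simp

lemma sep_functionals: "(\<And>f. clinear f \<Longrightarrow> f v = (0::complex)) \<Longrightarrow> v = 0"
  using coord_sep clinear_coord by blast

definition decompR :: "'a::cvec set \<Rightarrow> ('a, 'b::cvec) tensor \<Rightarrow> ('a, 'b) tensor" where
  "decompR F t = (\<Sum>b\<in>F. b \<otimes> sl1 (coord b) t)"

lemma clinear_decompR: "clinear (decompR F)"
  unfolding decompR_def
  by (rule clinearI)
     (simp_all add: clinear_add[OF clinear_sl1[OF clinear_coord]] clinear_scale[OF clinear_sl1[OF clinear_coord]]
       tens_add_right tens_scale_right sum.distrib cv.scale_sum_right)

lemma decompR_elem: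
  assumes "finite F" "{b. coord b x \<noteq> 0} \<subseteq> F"
  shows "decompR F (x \<otimes> y) = x \<otimes> y"
proof -
  have "decompR F (x \<otimes> y) = (\<Sum>b\<in>F. b \<otimes> (coord b x *\<^sub>C y))"
    by (simp add: decompR_def sl1_tens clinear_coord)
  also have "\<dots> = (\<Sum>b\<in>F. (coord b x *\<^sub>C b) \<otimes> y)"
    by (simp add: tens_scale_left tens_scale_right)
  also have "\<dots> = (\<Sum>b\<in>F. coord b x *\<^sub>C b) \<otimes> y"
    by (rule clinear_sum[OF clinear_tens_left, symmetric])
  also have "\<dots> = x \<otimes> y" using coord_expand[OF assms] by simp
  finally show ?thesis .
qed

definition fsupp :: "('a::cvec, 'b::cvec) tensor \<Rightarrow> 'a set" where
  "fsupp t = (\<Union>(c, x, y)\<in>set (rep_tensor t). {b. coord b x \<noteq> 0})"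

lemma finite_fsupp: "finite (fsupp t)"
  unfolding fsupp_def using finite_coord by auto

lemma decompR_id:
  assumes "finite F" "fsupp t \<subseteq> F"
  shows "decompR F t = t"
proof -
  have "\<forall>(c, x, y)\<in>set xs. {b. coord b x \<noteq> 0} \<subseteq> F \<Longrightarrow>
        decompR F (\<Sum>(c, x, y)\<leftarrow>xs. c *\<^sub>C (x \<otimes> y)) = (\<Sum>(c, x, y)\<leftarrow>xs. c *\<^sub>C (x \<otimes> y))" for xs
  proof (induction xs)
    case Nil
    then show ?case using clinear_zero[OF clinear_decompR] by simp
  next
    case (Cons a xs)
    obtain c x y where a: "a = (c, x, y)" by (cases a) auto
    show ?case using Cons decompR_elem[OF assms(1), of x y]
      by (simp add: a clinear_add[OF clinear_decompR] clinear_scale[OF clinear_decompR])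
  qed
  moreover have "\<forall>(c, x, y)\<in>set (rep_tensor t). {b. coord b x \<noteq> 0} \<subseteq> F"
    using assms(2) by (auto simp: fsupp_def)
  ultimately show ?thesis
    using abs_tensor_sum[of "rep_tensor t"] abs_rep_tensor[of t] by metis
qed

lemma lemmaF: "(\<And>f. clinear f \<Longrightarrow> sl1 f t = 0) \<Longrightarrow> t = 0"
  using decompR_id[OF finite_fsupp subset_refl, of t]
  by (simp add: decompR_def clinear_coord tens_zero_right)

lemma tflip_tens: "tflip (x \<otimes> y) = y \<otimes> x"
  by (simp add: tflip_def tlift_tens bil_def clinear_tens_left clinear_tens_right)
lemma clinear_tflip: "clinear tflip"
  unfolding tflip_def by (rule clinear_tlift) (simp add: bil_def clinear_tens_left clinear_tens_right)
lemma tflip_tflip: "tflip (tflip t) = t"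
  by (rule lin_ext[where L="\<lambda>t. tflip (tflip t)" and M="\<lambda>t. t", OF lin_comp[OF clinear_tflip clinear_tflip] lin_id])
     (simp add: tflip_tens)
lemma sl2_flip: "clinear g \<Longrightarrow> sl2 g t = sl1 g (tflip t)"
  by (rule lin_ext[OF clinear_sl2 lin_comp[OF clinear_sl1 clinear_tflip]])
     (simp_all add: tflip_tens sl1_tens sl2_tens)

lemma lemmaF2: "(\<And>g. clinear g \<Longrightarrow> sl2 g t = 0) \<Longrightarrow> t = 0"
  using lemmaF[of "tflip t"] sl2_flip tflip_tflip clinear_zero[OF clinear_tflip] by metis


lemma lin_mul_left: "clinear (\<lambda>y. (e::'a::calg) * y)" by (rule lin_mult_r[OF lin_id])
lemma lin_mul_right: "clinear (\<lambda>y. y * (e::'a::calg))" by (rule lin_mult_l[OF lin_id])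

definition lm1 :: "'a::calg \<Rightarrow> ('a, 'b::cvec) tensor \<Rightarrow> ('a, 'b) tensor" where
  "lm1 e = tmap (\<lambda>y. e * y) (\<lambda>y. y)"
definition rm1 :: "'a::calg \<Rightarrow> ('a, 'b::cvec) tensor \<Rightarrow> ('a, 'b) tensor" where
  "rm1 e = tmap (\<lambda>y. y * e) (\<lambda>y. y)"
definition lm2 :: "'b::calg \<Rightarrow> ('a::cvec, 'b) tensor \<Rightarrow> ('a, 'b) tensor" where
  "lm2 e = tmap (\<lambda>y. y) (\<lambda>y. e * y)"
definition rm2 :: "'b::calg \<Rightarrow> ('a::cvec, 'b) tensor \<Rightarrow> ('a, 'b) tensor" where
  "rm2 e = tmap (\<lambda>y. y) (\<lambda>y. y * e)"

lemma lm1_tens[simp]: "lm1 e (x \<otimes> y) = (e * x) \<otimes> y"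
  by (simp add: lm1_def tmap_tens lin_mul_left lin_id)
lemma rm1_tens[simp]: "rm1 e (x \<otimes> y) = (x * e) \<otimes> y"
  by (simp add: rm1_def tmap_tens lin_mul_right lin_id)
lemma lm2_tens[simp]: "lm2 e (x \<otimes> y) = x \<otimes> (e * y)"
  by (simp add: lm2_def tmap_tens lin_mul_left lin_id)
lemma rm2_tens[simp]: "rm2 e (x \<otimes> y) = x \<otimes> (y * e)"
  by (simp add: rm2_def tmap_tens lin_mul_right lin_id)

lemma clinear_lm1: "clinear (lm1 e)" by (simp add: lm1_def clinear_tmap lin_mul_left lin_id)
lemma clinear_rm1: "clinear (rm1 e)" by (simp add: rm1_def clinear_tmap lin_mul_right lin_id)
lemma clinear_lm2: "clinear (lm2 e)" by (simp add: lm2_def clinear_tmap lin_mul_left lin_id)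
lemma clinear_rm2: "clinear (rm2 e)" by (simp add: rm2_def clinear_tmap lin_mul_right lin_id)

lemma bil_tmul_inner: "bil (\<lambda>x y. (x * (x'::'a::calg)) \<otimes> (y * (y'::'b::calg)))"
  by (intro bilI lin_tens_l lin_tens_r lin_mul_left lin_mul_right)

lemma bil_tmul_outer: "bil (\<lambda>x y. tlift (\<lambda>x' y'. (x * x') \<otimes> (y * y')) (t :: ('a::calg, 'b::calg) tensor))"
  by (intro bilI lin_tlift_fun lin_tens_l lin_tens_r lin_mul_left lin_mul_right)

lemma tmul_tens: "tmul (x \<otimes> y) (x' \<otimes> y') = (x * x') \<otimes> (y * y')"
  unfolding tmul_def
  by (simp add: tlift_tens bil_tmul_outer)
     (simp add: tlift_tens bil_def lin_tens_l lin_tens_r lin_mul_left lin_mul_right)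

lemma clinear_tmul_left: "clinear (\<lambda>s. tmul s t)"
  unfolding tmul_def by (rule clinear_tlift[OF bil_tmul_outer])

lemma clinear_tmul_right: "clinear (\<lambda>t. tmul s t)"
  unfolding tmul_def
  by (intro lin_tlift_fun lin_tlift_arg[OF _ lin_id])
     (simp add: bil_def lin_tens_l lin_tens_r lin_mul_left lin_mul_right)

lemma tmul_tens_right: "tmul s (x \<otimes> y) = rm1 x (rm2 y s)"
  by (rule lin_ext[where L="\<lambda>s. tmul s (x \<otimes> y)" and M="\<lambda>s. rm1 x (rm2 y s)",
        OF clinear_tmul_left lin_comp[OF clinear_rm1 clinear_rm2]])
     (simp add: tmul_tens)

lemma tmul_tens_left: "tmul (x \<otimes> y) t = lm1 x (lm2 y t)"
  by (rule lin_ext[where L="\<lambda>t. tmul (x \<otimes> y) t" and M="\<lambda>t. lm1 x (lm2 y t)",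
        OF clinear_tmul_right lin_comp[OF clinear_lm1 clinear_lm2]])
     (simp add: tmul_tens)

lemma lin_ext2:
  assumes "\<And>s. clinear (\<lambda>t. F s t)" "\<And>s. clinear (\<lambda>t. G s t)"
    "\<And>t. clinear (\<lambda>s. F s t)" "\<And>t. clinear (\<lambda>s. G s t)"
    "\<And>x y x' y'. F (x \<otimes> y) (x' \<otimes> y') = G (x \<otimes> y) (x' \<otimes> y')"
  shows "F s t = G s t"
proof -
  have "F (x \<otimes> y) t = G (x \<otimes> y) t" for x y
    by (rule lin_ext[where L="F (x \<otimes> y)" and M="G (x \<otimes> y)", OF assms(1) assms(2) assms(5)])
  then show ?thesis
    by (rule lin_ext[where L="\<lambda>s. F s t" and M="\<lambda>s. G s t", OF assms(3) assms(4)])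
qed

lemma tmul_rm2: "tmul s (rm2 b t) = rm2 b (tmul s t)"
  by (rule lin_ext2[where F="\<lambda>s t. tmul s (rm2 b t)" and G="\<lambda>s t. rm2 b (tmul s t)"])
     (simp_all add: lin_comp[OF clinear_tmul_right clinear_rm2] lin_comp[OF clinear_rm2 clinear_tmul_right]
        clinear_tmul_left lin_comp[OF clinear_rm2 clinear_tmul_left] tmul_tens mult.assoc)

lemma tmul_rm1: "tmul s (rm1 b t) = rm1 b (tmul s t)"
  by (rule lin_ext2[where F="\<lambda>s t. tmul s (rm1 b t)" and G="\<lambda>s t. rm1 b (tmul s t)"])
     (simp_all add: lin_comp[OF clinear_tmul_right clinear_rm1] lin_comp[OF clinear_rm1 clinear_tmul_right]
        clinear_tmul_left lin_comp[OF clinear_rm1 clinear_tmul_left] tmul_tens mult.assoc)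

lemma tmul_rm1_left: "tmul (rm1 e s) t = tmul s (lm1 e t)"
  by (rule lin_ext2[where F="\<lambda>s t. tmul (rm1 e s) t" and G="\<lambda>s t. tmul s (lm1 e t)"])
     (simp_all add: lin_comp[OF clinear_tmul_right clinear_lm1] clinear_tmul_right
        lin_comp[OF clinear_tmul_left clinear_rm1] clinear_tmul_left tmul_tens mult.assoc)

lemma rm2_rm2: "rm2 b (rm2 q v) = rm2 (q * b) v"
  by (rule lin_ext[OF lin_comp[OF clinear_rm2 clinear_rm2] clinear_rm2]) (simp add: mult.assoc)

lemma rm1_rm2: "rm1 x (rm2 y v) = rm2 y (rm1 x v)"
  by (rule lin_ext[OF lin_comp[OF clinear_rm1 clinear_rm2] lin_comp[OF clinear_rm2 clinear_rm1]]) simp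

lemma lm1_rm2: "lm1 x (rm2 y v) = rm2 y (lm1 x v)"
  by (rule lin_ext[OF lin_comp[OF clinear_lm1 clinear_rm2] lin_comp[OF clinear_rm2 clinear_lm1]]) simp

lemma lm1_rm1: "lm1 x (rm1 y v) = rm1 y (lm1 x v)"
  by (rule lin_ext[OF lin_comp[OF clinear_lm1 clinear_rm1] lin_comp[OF clinear_rm1 clinear_lm1]]) (simp add: mult.assoc)

lemma lm1_lm1: "lm1 x (lm1 y v) = lm1 (x * y) v"
  by (rule lin_ext[OF lin_comp[OF clinear_lm1 clinear_lm1] clinear_lm1]) (simp add: mult.assoc)

lemma rm1_rm1: "rm1 x (rm1 y v) = rm1 (y * x) v"
  by (rule lin_ext[OF lin_comp[OF clinear_rm1 clinear_rm1] clinear_rm1]) (simp add: mult.assoc)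

lemma nondeg_left: "nondegenerate ((*) :: 'a \<Rightarrow> 'a \<Rightarrow> 'a::calg) \<Longrightarrow> (\<And>y. x * y = 0) \<Longrightarrow> (x::'a) = 0"
  unfolding nondegenerate_def by blast
lemma nondeg_right: "nondegenerate ((*) :: 'a \<Rightarrow> 'a \<Rightarrow> 'a::calg) \<Longrightarrow> (\<And>y. y * x = 0) \<Longrightarrow> (x::'a) = 0"
  unfolding nondegenerate_def by blast

lemma sl1_rm2: "clinear f \<Longrightarrow> sl1 f (rm2 b t) = sl1 f t * b"
  by (rule lin_ext[where L="\<lambda>t. sl1 f (rm2 b t)" and M="\<lambda>t. sl1 f t * b"])
     (simp_all add: lin_comp[OF clinear_sl1 clinear_rm2] lin_mult_l[OF clinear_sl1] sl1_tens scaleC_mult_left)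

lemma lemmaN:
  fixes t :: "('r::cvec, 'a::calg) tensor"
  assumes nd: "nondegenerate ((*) :: 'a \<Rightarrow> 'a \<Rightarrow> 'a)" and h: "\<And>b. rm2 b t = 0"
  shows "t = 0"
proof (rule lemmaF)
  fix f :: "'r \<Rightarrow> complex" assume f: "clinear f"
  show "sl1 f t = 0"
  proof (rule nondeg_left[OF nd])
    fix y show "sl1 f t * y = 0" using sl1_rm2[OF f, of y t] h[of y] clinear_zero[OF clinear_sl1[OF f]] by metis
  qed
qed

lemma sl2_tmul:
  assumes g: "clinear g"
  shows "sl2 g (tmul (x \<otimes> y) d) = x * sl2 (\<lambda>q. g (y * q)) d"
proof -
  have hl: "clinear (\<lambda>q. g (y * q))" by (rule lin_comp[OF g lin_mul_left])
  show ?thesis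
    by (rule lin_ext[where L="\<lambda>d. sl2 g (tmul (x \<otimes> y) d)" and M="\<lambda>d. x * sl2 (\<lambda>q. g (y * q)) d"])
       (simp_all add: lin_comp[OF clinear_sl2[OF g] clinear_tmul_right] lin_mult_r[OF clinear_sl2[OF hl]]
         tmul_tens sl2_tens[OF g] sl2_tens[OF hl] scaleC_mult_right)
qed

lemma slice_swap: "clinear f \<Longrightarrow> clinear h \<Longrightarrow> h (sl1 f d) = f (sl2 h d)"
  by (rule lin_ext[where L="\<lambda>d. h (sl1 f d)" and M="\<lambda>d. f (sl2 h d)"])
     (simp_all add: lin_comp[OF _ clinear_sl1] lin_comp[OF _ clinear_sl2] sl1_tens sl2_tens clinear_scale scaleC_complex_def)

lemma uniq_left:
  fixes X Y :: "('a::calg, 'a) tensor"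
  assumes nd: "nondegenerate ((*) :: 'a \<Rightarrow> 'a \<Rightarrow> 'a)" and h: "\<And>s. tmul s X = tmul s Y"
  shows "X = Y"
proof -
  define d where "d = X - Y"
  have d0: "tmul s d = 0" for s
    using h[of s] clinear_diff[OF clinear_tmul_right, of s X Y] by (simp add: d_def)
  have "d = 0"
  proof (rule lemmaF)
    fix f :: "'a \<Rightarrow> complex" assume f: "clinear f"
    show "sl1 f d = 0"
    proof (rule nondeg_right[OF nd])
      fix y
      show "y * sl1 f d = 0"
      proof (rule sep_functionals)
        fix g :: "'a \<Rightarrow> complex" assume g: "clinear g"
        have hl: "clinear (\<lambda>q. g (y * q))" by (rule lin_comp[OF g lin_mul_left])
        have "sl2 (\<lambda>q. g (y * q)) d = 0"
        proof (rule nondeg_right[OF nd])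
          fix x show "x * sl2 (\<lambda>q. g (y * q)) d = 0"
            using sl2_tmul[OF g, of x y d] d0[of "x \<otimes> y"] clinear_zero[OF clinear_sl2[OF g]] by metis
        qed
        then show "g (y * sl1 f d) = 0"
          using slice_swap[OF f hl, of d] clinear_zero[OF f] by simp
      qed
    qed
  qed
  then show ?thesis by (simp add: d_def)
qed

lemma sl2_lm1: "clinear g \<Longrightarrow> sl2 g (lm1 e W) = e * sl2 g W"
  by (rule lin_ext[where L="\<lambda>W. sl2 g (lm1 e W)" and M="\<lambda>W. e * sl2 g W"])
     (simp_all add: lin_comp[OF clinear_sl2 clinear_lm1] lin_mult_r[OF clinear_sl2] sl2_tens scaleC_mult_right)

lemma nondeg_lm1:
  fixes W :: "('a::calg, 'b::cvec) tensor"
  assumes nd: "nondegenerate ((*) :: 'a \<Rightarrow> 'a \<Rightarrow> 'a)" and h: "\<And>e. lm1 e W = 0"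
  shows "W = 0"
proof (rule lemmaF2)
  fix g :: "'b \<Rightarrow> complex" assume g: "clinear g"
  show "sl2 g W = 0"
    by (rule nondeg_right[OF nd]) (metis sl2_lm1[OF g] h clinear_zero[OF clinear_sl2[OF g]])
qed

definition lm3 :: "'a::calg \<Rightarrow> (('a, 'b::cvec) tensor, 'c::cvec) tensor \<Rightarrow> (('a, 'b) tensor, 'c) tensor" where
  "lm3 e = tmap (lm1 e) (\<lambda>y. y)"

lemma lm3_tens[simp]: "lm3 e (u \<otimes> v) = lm1 e u \<otimes> v"
  by (simp add: lm3_def tmap_tens clinear_lm1 lin_id)
lemma clinear_lm3: "clinear (lm3 e)"
  by (simp add: lm3_def clinear_tmap clinear_lm1 lin_id)

lemma sl2_lm3: "clinear g \<Longrightarrow> sl2 g (lm3 e X) = lm1 e (sl2 g X)"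
  by (rule lin_ext[where L="\<lambda>X. sl2 g (lm3 e X)" and M="\<lambda>X. lm1 e (sl2 g X)"])
     (simp_all add: lin_comp[OF clinear_sl2 clinear_lm3] lin_comp[OF clinear_lm1 clinear_sl2] sl2_tens clinear_scale[OF clinear_lm1])

lemma nondeg_lm3:
  fixes X :: "(('a::calg, 'b::cvec) tensor, 'c::cvec) tensor"
  assumes nd: "nondegenerate ((*) :: 'a \<Rightarrow> 'a \<Rightarrow> 'a)" and h: "\<And>e. lm3 e X = 0"
  shows "X = 0"
proof (rule lemmaF2)
  fix g :: "'c \<Rightarrow> complex" assume g: "clinear g"
  show "sl2 g X = 0"
    by (rule nondeg_lm1[OF nd]) (metis sl2_lm3[OF g] h clinear_zero[OF clinear_sl2[OF g]])
qed

lemma nondeg_lm3_eq: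
  fixes X Y :: "(('a::calg, 'b::cvec) tensor, 'c::cvec) tensor"
  assumes nd: "nondegenerate ((*) :: 'a \<Rightarrow> 'a \<Rightarrow> 'a)" and h: "\<And>e. lm3 e X = lm3 e Y"
  shows "X = Y"
proof -
  have "lm3 e (X - Y) = 0" for e using h[of e] clinear_diff[OF clinear_lm3, of e X Y] by simp
  then have "X - Y = 0" by (rule nondeg_lm3[OF nd])
  then show ?thesis by simp
qed


lemma bil_comp_l: "bil \<phi> \<Longrightarrow> clinear f \<Longrightarrow> bil (\<lambda>p q. \<phi> (f p) q)"
  unfolding bil_def by (auto intro: lin_comp)
lemma bil_comp_r: "bil \<phi> \<Longrightarrow> clinear g \<Longrightarrow> bil (\<lambda>p q. \<phi> p (g q))"
  unfolding bil_def by (auto intro: lin_comp)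

lemma tlift_tmap:
  assumes "clinear f" "clinear g" "bil \<phi>"
  shows "tlift \<phi> (tmap f g X) = tlift (\<lambda>p q. \<phi> (f p) (g q)) X"
proof -
  have b: "bil (\<lambda>p q. \<phi> (f p) (g q))" by (rule bil_comp_r[OF bil_comp_l[OF assms(3,1)] assms(2)])
  show ?thesis
    by (rule lin_ext[OF lin_comp[OF clinear_tlift[OF assms(3)] clinear_tmap[OF assms(1,2)]] clinear_tlift[OF b]])
       (simp add: tmap_tens[OF assms(1,2)] tlift_tens[OF assms(3)] tlift_tens[OF b])
qed

lemma tlift_lm1: "bil \<phi> \<Longrightarrow> tlift \<phi> (lm1 e X) = tlift (\<lambda>p q. \<phi> (e * p) q) X"
  unfolding lm1_def by (simp add: tlift_tmap lin_mul_left lin_id)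
lemma tlift_rm1: "bil \<phi> \<Longrightarrow> tlift \<phi> (rm1 e X) = tlift (\<lambda>p q. \<phi> (p * e) q) X"
  unfolding rm1_def by (simp add: tlift_tmap lin_mul_right lin_id)
lemma tlift_lm2: "bil \<phi> \<Longrightarrow> tlift \<phi> (lm2 e X) = tlift (\<lambda>p q. \<phi> p (e * q)) X"
  unfolding lm2_def by (simp add: tlift_tmap lin_mul_left lin_id)
lemma tlift_rm2: "bil \<phi> \<Longrightarrow> tlift \<phi> (rm2 e X) = tlift (\<lambda>p q. \<phi> p (q * e)) X"
  unfolding rm2_def by (simp add: tlift_tmap lin_mul_right lin_id)

lemma rm2_param_add: "rm2 (b + b') v = rm2 b v + rm2 b' v"
  by (rule lin_ext[OF clinear_rm2 lin_add[OF clinear_rm2 clinear_rm2]])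
     (simp add: distrib_left tens_add_right)
lemma rm2_param_scale: "rm2 (c *\<^sub>C b) v = c *\<^sub>C rm2 b v"
  by (rule lin_ext[OF clinear_rm2 lin_scale[OF clinear_rm2]])
     (simp add: scaleC_mult_right tens_scale_right)
lemma rm1_param_add: "rm1 (b + b') v = rm1 b v + rm1 b' v"
  by (rule lin_ext[OF clinear_rm1 lin_add[OF clinear_rm1 clinear_rm1]])
     (simp add: distrib_left tens_add_left)
lemma rm1_param_scale: "rm1 (c *\<^sub>C b) v = c *\<^sub>C rm1 b v"
  by (rule lin_ext[OF clinear_rm1 lin_scale[OF clinear_rm1]])
     (simp add: scaleC_mult_right tens_scale_left)
lemma lm1_param_add: "lm1 (b + b') v = lm1 b v + lm1 b' v"
  by (rule lin_ext[OF clinear_lm1 lin_add[OF clinear_lm1 clinear_lm1]])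
     (simp add: distrib_right tens_add_left)
lemma lm1_param_scale: "lm1 (c *\<^sub>C b) v = c *\<^sub>C lm1 b v"
  by (rule lin_ext[OF clinear_lm1 lin_scale[OF clinear_lm1]])
     (simp add: scaleC_mult_left tens_scale_left)

lemma lin_rm2_param: "clinear (\<lambda>b. rm2 b v)"
  by (simp add: clinearI rm2_param_add rm2_param_scale)
lemma lin_rm1_param: "clinear (\<lambda>b. rm1 b v)"
  by (simp add: clinearI rm1_param_add rm1_param_scale)
lemma lin_lm1_param: "clinear (\<lambda>b. lm1 b v)"
  by (simp add: clinearI lm1_param_add lm1_param_scale)

lemma bil_rm1rm2: "bil (\<lambda>g d. rm1 g (rm2 d v))"
  by (intro bilI lin_rm1_param lin_comp[OF clinear_rm1 lin_rm2_param])

lemma tmul_as_tlift: "tmul v w = tlift (\<lambda>g d. rm1 g (rm2 d v)) w"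
  by (rule lin_ext[OF clinear_tmul_right clinear_tlift[OF bil_rm1rm2]])
     (simp add: tlift_tens[OF bil_rm1rm2] tmul_tens_right)

lemma sl1_tmul:
  assumes f: "clinear f"
  shows "sl1 f (tmul d (x \<otimes> y)) = sl1 (\<lambda>p. f (p * x)) d * y"
proof -
  have hl: "clinear (\<lambda>p. f (p * x))" by (rule lin_comp[OF f lin_mul_right])
  show ?thesis
    by (rule lin_ext[where L="\<lambda>d. sl1 f (tmul d (x \<otimes> y))" and M="\<lambda>d. sl1 (\<lambda>p. f (p * x)) d * y"])
       (simp_all add: lin_comp[OF clinear_sl1[OF f] clinear_tmul_left] lin_mult_l[OF clinear_sl1[OF hl]]
         tmul_tens sl1_tens[OF f] sl1_tens[OF hl] scaleC_mult_left)
qed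

lemma uniq_right:
  fixes X Y :: "('a::calg, 'a) tensor"
  assumes nd: "nondegenerate ((*) :: 'a \<Rightarrow> 'a \<Rightarrow> 'a)" and h: "\<And>s. tmul X s = tmul Y s"
  shows "X = Y"
proof -
  define d where "d = X - Y"
  have d0: "tmul d s = 0" for s
    using h[of s] clinear_diff[OF clinear_tmul_left[of s], of X Y] by (simp add: d_def)
  have "d = 0"
  proof (rule lemmaF2)
    fix g :: "'a \<Rightarrow> complex" assume g: "clinear g"
    show "sl2 g d = 0"
    proof (rule nondeg_left[OF nd])
      fix x
      show "sl2 g d * x = 0"
      proof (rule sep_functionals)
        fix f :: "'a \<Rightarrow> complex" assume f: "clinear f"
        have hl: "clinear (\<lambda>p. f (p * x))" by (rule lin_comp[OF f lin_mul_right])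
        have "sl1 (\<lambda>p. f (p * x)) d = 0"
        proof (rule nondeg_left[OF nd])
          fix y show "sl1 (\<lambda>p. f (p * x)) d * y = 0"
            using sl1_tmul[OF f, of d x y] d0[of "x \<otimes> y"] clinear_zero[OF clinear_sl1[OF f]] by metis
        qed
        then show "f (sl2 g d * x) = 0"
          using slice_swap[OF hl g, of d] clinear_zero[OF g] by simp
      qed
    qed
  qed
  then show ?thesis by (simp add: d_def)
qed

lemma memb_inj:
  assumes nd: "nondegenerate ((*) :: 'a \<Rightarrow> 'a \<Rightarrow> 'a::calg)"
  shows "memb tmul (t :: ('a, 'a) tensor) = memb tmul t' \<Longrightarrow> t = t'"
  unfolding memb_def by (rule uniq_left[OF nd]) (simp add: fun_eq_iff)

lemma memb_the_elem:
  assumes nd: "nondegenerate ((*) :: 'a \<Rightarrow> 'a \<Rightarrow> 'a::calg)" and "in_alg tmul (m :: ('a, 'a) tensor mult)"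
  shows "m = memb tmul (the_elem tmul m)"
proof -
  obtain t where t: "m = memb tmul t" using assms(2) by (auto simp: in_alg_def)
  have "(THE t. m = memb tmul t) = t"
    by (rule the_equality) (use t memb_inj[OF nd] in auto)
  then show ?thesis by (simp add: the_elem_def t)
qed

lemma is_mult_snd_add:
  assumes nd: "nondegenerate ((*) :: 'a \<Rightarrow> 'a \<Rightarrow> 'a::calg)" and m: "is_mult tmul (m :: ('a, 'a) tensor mult)"
  shows "snd m (x + y) = snd m x + snd m y"
proof (rule uniq_right[OF nd])
  fix s
  have e: "tmul (snd m z) s = tmul z (fst m s)" for z using m by (simp add: is_mult_def)
  show "tmul (snd m (x + y)) s = tmul (snd m x + snd m y) s"
    by (simp add: e clinear_add[OF clinear_tmul_left])
qed

lemma is_mult_snd_scale: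
  assumes nd: "nondegenerate ((*) :: 'a \<Rightarrow> 'a \<Rightarrow> 'a::calg)" and m: "is_mult tmul (m :: ('a, 'a) tensor mult)"
  shows "snd m (c *\<^sub>C x) = c *\<^sub>C snd m x"
proof (rule uniq_right[OF nd])
  fix s
  have e: "tmul (snd m z) s = tmul z (fst m s)" for z using m by (simp add: is_mult_def)
  show "tmul (snd m (c *\<^sub>C x)) s = tmul (c *\<^sub>C snd m x) s"
    by (simp add: e clinear_scale[OF clinear_tmul_left])
qed

lemma is_mult_snd_lin:
  "nondegenerate ((*) :: 'a \<Rightarrow> 'a \<Rightarrow> 'a::calg) \<Longrightarrow> is_mult tmul (m :: ('a, 'a) tensor mult) \<Longrightarrow> clinear (snd m)"
  by (simp add: clinearI is_mult_snd_add is_mult_snd_scale)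

lemma nondeg_left_eq:
  assumes nd: "nondegenerate ((*) :: 'a \<Rightarrow> 'a \<Rightarrow> 'a::calg)" and h: "\<And>w. a * w = b * w"
  shows "(a::'a) = b"
  using nondeg_left[OF nd, of "a - b"] h by (simp add: left_diff_distrib)

lemma nondeg_right_eq:
  assumes nd: "nondegenerate ((*) :: 'a \<Rightarrow> 'a \<Rightarrow> 'a::calg)" and h: "\<And>w. w * a = w * b"
  shows "(a::'a) = b"
  using nondeg_right[OF nd, of "a - b"] h by (simp add: right_diff_distrib)

lemma is_multR_snd_lin:
  assumes nd: "nondegenerate ((*) :: 'r \<Rightarrow> 'r \<Rightarrow> 'r::calg)" and m: "is_mult (*) (m :: 'r mult)"
  shows "clinear (snd m)"
proof (rule clinearI)
  have e: "snd m z * w = z * fst m w" for z w using m by (simp add: is_mult_def)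
  fix x y
  show "snd m (x + y) = snd m x + snd m y"
    by (rule nondeg_left_eq[OF nd]) (simp add: e distrib_right distrib_left)
next
  have e: "snd m z * w = z * fst m w" for z w using m by (simp add: is_mult_def)
  fix c x
  show "snd m (c *\<^sub>C x) = c *\<^sub>C snd m x"
    by (rule nondeg_left_eq[OF nd]) (simp add: e scaleC_mult_left scaleC_mult_right)
qed

lemma is_multR_fst_lin:
  assumes nd: "nondegenerate ((*) :: 'r \<Rightarrow> 'r \<Rightarrow> 'r::calg)" and m: "is_mult (*) (m :: 'r mult)"
  shows "clinear (fst m)"
proof (rule clinearI)
  have e: "snd m w * z = w * fst m z" for z w using m by (simp add: is_mult_def)
  fix x y
  show "fst m (x + y) = fst m x + fst m y"
    by (rule nondeg_right_eq[OF nd]) (simp add: e[symmetric] distrib_left distrib_right)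
next
  have e: "snd m w * z = w * fst m z" for z w using m by (simp add: is_mult_def)
  fix c x
  show "fst m (c *\<^sub>C x) = c *\<^sub>C fst m x"
    by (rule nondeg_right_eq[OF nd]) (simp add: e[symmetric] scaleC_mult_right scaleC_mult_left)
qed

lemma is_multR_comm:
  assumes nd: "nondegenerate ((*) :: 'r \<Rightarrow> 'r \<Rightarrow> 'r::calg)" and m: "is_mult (*) (m :: 'r mult)"
    and m': "is_mult (*) (m' :: 'r mult)"
  shows "fst m (snd m' y) = snd m' (fst m y)"
proof (rule nondeg_right_eq[OF nd])
  fix w
  have a: "snd m w * z = w * fst m z" for z w using m by (simp add: is_mult_def)
  have b: "snd m' (z * w) = z * snd m' w" for z w using m' by (simp add: is_mult_def)
  show "w * fst m (snd m' y) = w * snd m' (fst m y)"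
    by (simp add: a[symmetric] b[symmetric])
qed


locale setting =
  fixes \<Delta> :: "'a::calg \<Rightarrow> ('a, 'a) tensor mult"
    and S :: "'a \<Rightarrow> 'a"
    and act :: "'a \<Rightarrow> 'r::calg \<Rightarrow> 'r"
    and \<gamma> :: "'a \<Rightarrow> 'r mult"
  assumes H1: "regular_mult_hopf \<Delta>"
    and H2: "is_antipode \<Delta> S"
    and H3: "module_algebra \<Delta> act"
    and H4: "inner_action \<Delta> S act \<gamma>"
begin

lemma ndA: "nondegenerate ((*) :: 'a \<Rightarrow> 'a \<Rightarrow> 'a)" using H1 by (simp add: regular_mult_hopf_def)
lemma ndR: "nondegenerate ((*) :: 'r \<Rightarrow> 'r \<Rightarrow> 'r)" using H3 by (simp add: module_algebra_def)
lemma homD: "hom_to_mult tmul \<Delta>" using H1 by (simp add: regular_mult_hopf_def)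
lemma multD: "is_mult tmul (\<Delta> a)" using homD by (simp add: hom_to_mult_def)
lemma D_add: "\<Delta> (a + b) = madd (\<Delta> a) (\<Delta> b)" using homD by (simp add: hom_to_mult_def)
lemma D_scale: "\<Delta> (c *\<^sub>C a) = mscale c (\<Delta> a)" using homD by (simp add: hom_to_mult_def)
lemma D_mult: "\<Delta> (a * b) = mcomp (\<Delta> a) (\<Delta> b)" using homD by (simp add: hom_to_mult_def)
lemma inalg1: "in_alg tmul (mcomp (\<Delta> a) (one_tens b))" using H1 by (simp add: regular_mult_hopf_def)
lemma inalg2: "in_alg tmul (mcomp (tens_one a) (\<Delta> b))" using H1 by (simp add: regular_mult_hopf_def)
lemma inalg3: "in_alg tmul (mcomp (\<Delta> a) (tens_one b))" using H1 by (simp add: regular_mult_hopf_def)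
lemma coassoc: "tlift (\<lambda>p q. D2 \<Delta> a p \<otimes> q) (D1 \<Delta> b c) = tassoc (tlift (\<lambda>u v. u \<otimes> D1 \<Delta> v c) (D2 \<Delta> a b))"
  using H1 by (simp add: regular_mult_hopf_def)
lemma bijD2: "bij (tlift (D2 \<Delta>))" using H1 by (simp add: regular_mult_hopf_def)

lemma snd_D_lin: "clinear (snd (\<Delta> a))" by (rule is_mult_snd_lin[OF ndA multD])

lemma M1: "tmul s (D1 \<Delta> a b) = rm2 b (snd (\<Delta> a) s)"
proof -
  have "snd (memb tmul (D1 \<Delta> a b)) s = snd (mcomp (\<Delta> a) (one_tens b)) s"
    unfolding D1_def using memb_the_elem[OF ndA inalg1[of a b]] by simp
  then show ?thesis by (simp add: memb_def mcomp_def one_tens_def rm2_def id_def)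
qed

lemma M2: "tmul s (D2 \<Delta> e a) = snd (\<Delta> a) (rm1 e s)"
proof -
  have "snd (memb tmul (D2 \<Delta> e a)) s = snd (mcomp (tens_one e) (\<Delta> a)) s"
    unfolding D2_def using memb_the_elem[OF ndA inalg2[of e a]] by simp
  then show ?thesis by (simp add: memb_def mcomp_def tens_one_def rm1_def id_def)
qed

lemma M3: "tmul s (D3 \<Delta> a d) = rm1 d (snd (\<Delta> a) s)"
proof -
  have "snd (memb tmul (D3 \<Delta> a d)) s = snd (mcomp (\<Delta> a) (tens_one d)) s"
    unfolding D3_def using memb_the_elem[OF ndA inalg3[of a d]] by simp
  then show ?thesis by (simp add: memb_def mcomp_def tens_one_def rm1_def id_def)
qed

lemma snd_D_add: "snd (\<Delta> (a + b)) s = snd (\<Delta> a) s + snd (\<Delta> b) s"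
  by (simp add: D_add madd_def)
lemma snd_D_scale: "snd (\<Delta> (c *\<^sub>C a)) s = c *\<^sub>C snd (\<Delta> a) s"
  by (simp add: D_scale mscale_def)
lemma snd_D_mult: "snd (\<Delta> (a * b)) s = snd (\<Delta> b) (snd (\<Delta> a) s)"
  by (simp add: D_mult mcomp_def)

lemma D1_lin1: "clinear (\<lambda>a. D1 \<Delta> a b)"
proof (rule clinearI)
  fix x y show "D1 \<Delta> (x + y) b = D1 \<Delta> x b + D1 \<Delta> y b"
    by (rule uniq_left[OF ndA]) (simp add: M1 snd_D_add clinear_add[OF clinear_rm2] clinear_add[OF clinear_tmul_right])
next
  fix c x show "D1 \<Delta> (c *\<^sub>C x) b = c *\<^sub>C D1 \<Delta> x b"
    by (rule uniq_left[OF ndA]) (simp add: M1 snd_D_scale clinear_scale[OF clinear_rm2] clinear_scale[OF clinear_tmul_right])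
qed

lemma D1_lin2: "clinear (\<lambda>b. D1 \<Delta> a b)"
proof (rule clinearI)
  fix x y show "D1 \<Delta> a (x + y) = D1 \<Delta> a x + D1 \<Delta> a y"
    by (rule uniq_left[OF ndA]) (simp add: M1 rm2_param_add clinear_add[OF clinear_tmul_right])
next
  fix c x show "D1 \<Delta> a (c *\<^sub>C x) = c *\<^sub>C D1 \<Delta> a x"
    by (rule uniq_left[OF ndA]) (simp add: M1 rm2_param_scale clinear_scale[OF clinear_tmul_right])
qed

lemma D2_lin1: "clinear (\<lambda>e. D2 \<Delta> e a)"
proof (rule clinearI)
  fix x y show "D2 \<Delta> (x + y) a = D2 \<Delta> x a + D2 \<Delta> y a"
    by (rule uniq_left[OF ndA]) (simp add: M2 rm1_param_add clinear_add[OF snd_D_lin] clinear_add[OF clinear_tmul_right])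
next
  fix c x show "D2 \<Delta> (c *\<^sub>C x) a = c *\<^sub>C D2 \<Delta> x a"
    by (rule uniq_left[OF ndA]) (simp add: M2 rm1_param_scale clinear_scale[OF snd_D_lin] clinear_scale[OF clinear_tmul_right])
qed

lemma D2_lin2: "clinear (\<lambda>a. D2 \<Delta> e a)"
proof (rule clinearI)
  fix x y show "D2 \<Delta> e (x + y) = D2 \<Delta> e x + D2 \<Delta> e y"
    by (rule uniq_left[OF ndA]) (simp add: M2 snd_D_add clinear_add[OF clinear_tmul_right])
next
  fix c x show "D2 \<Delta> e (c *\<^sub>C x) = c *\<^sub>C D2 \<Delta> e x"
    by (rule uniq_left[OF ndA]) (simp add: M2 snd_D_scale clinear_scale[OF clinear_tmul_right])
qed

lemma D3_lin1: "clinear (\<lambda>a. D3 \<Delta> a d)"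
proof (rule clinearI)
  fix x y show "D3 \<Delta> (x + y) d = D3 \<Delta> x d + D3 \<Delta> y d"
    by (rule uniq_left[OF ndA]) (simp add: M3 snd_D_add clinear_add[OF clinear_rm1] clinear_add[OF clinear_tmul_right])
next
  fix c x show "D3 \<Delta> (c *\<^sub>C x) d = c *\<^sub>C D3 \<Delta> x d"
    by (rule uniq_left[OF ndA]) (simp add: M3 snd_D_scale clinear_scale[OF clinear_rm1] clinear_scale[OF clinear_tmul_right])
qed

lemma D3_lin2: "clinear (\<lambda>d. D3 \<Delta> a d)"
proof (rule clinearI)
  fix x y show "D3 \<Delta> a (x + y) = D3 \<Delta> a x + D3 \<Delta> a y"
    by (rule uniq_left[OF ndA]) (simp add: M3 rm1_param_add clinear_add[OF clinear_tmul_right])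
next
  fix c x show "D3 \<Delta> a (c *\<^sub>C x) = c *\<^sub>C D3 \<Delta> a x"
    by (rule uniq_left[OF ndA]) (simp add: M3 rm1_param_scale clinear_scale[OF clinear_tmul_right])
qed

lemma bilD1: "bil (D1 \<Delta>)" by (simp add: bil_def D1_lin1 D1_lin2)
lemma bilD2: "bil (D2 \<Delta>)" by (simp add: bil_def D2_lin1 D2_lin2)
lemma bilD3: "bil (D3 \<Delta>)" by (simp add: bil_def D3_lin1 D3_lin2)

lemma id_a: "lm1 e (D1 \<Delta> p c) = rm2 c (D2 \<Delta> e p)"
  by (rule uniq_left[OF ndA]) (simp add: tmul_rm1_left[symmetric] M1 M2 tmul_rm2)

lemma id_a': "lm1 e (D3 \<Delta> p f) = rm1 f (D2 \<Delta> e p)"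
  by (rule uniq_left[OF ndA]) (simp add: tmul_rm1_left[symmetric] M3 M2 tmul_rm1)

lemma id_b: "D1 \<Delta> (r * c) b = tlift (\<lambda>g d. rm1 g (D1 \<Delta> r d)) (D1 \<Delta> c b)"
proof (rule uniq_left[OF ndA])
  fix s
  have "tmul s (D1 \<Delta> (r * c) b) = tmul (snd (\<Delta> r) s) (D1 \<Delta> c b)"
    by (simp add: M1 snd_D_mult)
  also have "\<dots> = tlift (\<lambda>g d. rm1 g (rm2 d (snd (\<Delta> r) s))) (D1 \<Delta> c b)"
    by (rule tmul_as_tlift)
  also have "\<dots> = tlift (\<lambda>g d. tmul s (rm1 g (D1 \<Delta> r d))) (D1 \<Delta> c b)"
    by (simp add: tmul_rm1 M1)
  also have "\<dots> = tmul s (tlift (\<lambda>g d. rm1 g (D1 \<Delta> r d)) (D1 \<Delta> c b))"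
    by (rule tlift_fun_linear[OF clinear_tmul_right, symmetric])
  finally show "tmul s (D1 \<Delta> (r * c) b) = tmul s (tlift (\<lambda>g d. rm1 g (D1 \<Delta> r d)) (D1 \<Delta> c b))" .
qed

lemma id_c: "D1 \<Delta> a (q * b) = rm2 b (D1 \<Delta> a q)"
  by (rule uniq_left[OF ndA]) (simp add: M1 tmul_rm2 rm2_rm2)

end


lemma bil_assoc_inner: "bil (\<lambda>y z. (x \<otimes> y) \<otimes> z)"
  by (intro bilI lin_tens_l lin_tens_r lin_id)

lemma bil_assoc_outer: "bil (\<lambda>x u. tlift (\<lambda>y z. (x \<otimes> y) \<otimes> z) u)"
  by (intro bilI clinear_tlift[OF bil_assoc_inner] lin_tlift_fun lin_tens_l lin_id)

lemma clinear_tassoc: "clinear tassoc"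
  unfolding tassoc_def by (rule clinear_tlift[OF bil_assoc_outer])

lemma tassoc_tens: "tassoc (x \<otimes> u) = tlift (\<lambda>y z. (x \<otimes> y) \<otimes> z) u"
  unfolding tassoc_def by (simp add: tlift_tens[OF bil_assoc_outer])

lemma tassoc_nest: "tassoc (tlift (\<lambda>u v. u \<otimes> \<psi> v) X) = tlift (\<lambda>u v. tlift (\<lambda>y z. (u \<otimes> y) \<otimes> z) (\<psi> v)) X"
  by (simp add: tlift_fun_linear[OF clinear_tassoc] tassoc_tens)

definition rm3 :: "'a::calg \<Rightarrow> (('a, 'b::cvec) tensor, 'c::cvec) tensor \<Rightarrow> (('a, 'b) tensor, 'c) tensor" where
  "rm3 e = tmap (rm1 e) (\<lambda>y. y)"
lemma rm3_tens[simp]: "rm3 e (u \<otimes> v) = rm1 e u \<otimes> v"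
  by (simp add: rm3_def tmap_tens clinear_rm1 lin_id)
lemma clinear_rm3: "clinear (rm3 e)"
  by (simp add: rm3_def clinear_tmap clinear_rm1 lin_id)

definition mid3 :: "'b::calg \<Rightarrow> (('a::cvec, 'b) tensor, 'c::cvec) tensor \<Rightarrow> (('a, 'b) tensor, 'c) tensor" where
  "mid3 e = tmap (rm2 e) (\<lambda>y. y)"
lemma mid3_tens[simp]: "mid3 e (u \<otimes> v) = rm2 e u \<otimes> v"
  by (simp add: mid3_def tmap_tens clinear_rm2 lin_id)
lemma clinear_mid3: "clinear (mid3 e)"
  by (simp add: mid3_def clinear_tmap clinear_rm2 lin_id)

context setting
begin

definition eps :: "'a \<Rightarrow> complex" where
  "eps = (SOME \<epsilon>. is_counit \<Delta> \<epsilon> \<and>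
     (\<forall>a b. tlift (\<lambda>p q. S p * q) (D1 \<Delta> a b) = \<epsilon> a *\<^sub>C b) \<and>
     (\<forall>a b. tlift (\<lambda>p q. p * S q) (D2 \<Delta> a b) = \<epsilon> b *\<^sub>C a))"

lemma eps_spec: "is_counit \<Delta> eps \<and>
     (\<forall>a b. tlift (\<lambda>p q. S p * q) (D1 \<Delta> a b) = eps a *\<^sub>C b) \<and>
     (\<forall>a b. tlift (\<lambda>p q. p * S q) (D2 \<Delta> a b) = eps b *\<^sub>C a)"
proof -
  have ex: "\<exists>\<epsilon>. is_counit \<Delta> \<epsilon> \<and>
     (\<forall>a b. tlift (\<lambda>p q. S p * q) (D1 \<Delta> a b) = \<epsilon> a *\<^sub>C b) \<and>
     (\<forall>a b. tlift (\<lambda>p q. p * S q) (D2 \<Delta> a b) = \<epsilon> b *\<^sub>C a)"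
    using H2 by (simp add: is_antipode_def)
  show ?thesis unfolding eps_def by (rule someI_ex[OF ex])
qed

lemma S_lin: "clinear S" using H2 by (simp add: is_antipode_def)
lemma eps_lin: "clinear eps" using eps_spec by (simp add: is_counit_def)
lemma C1: "tlift (\<lambda>p q. eps p *\<^sub>C q) (D1 \<Delta> a b) = a * b" using eps_spec by (simp add: is_counit_def)
lemma C2: "tlift (\<lambda>p q. eps q *\<^sub>C p) (D2 \<Delta> a b) = a * b" using eps_spec by (simp add: is_counit_def)
lemma A1: "tlift (\<lambda>p q. S p * q) (D1 \<Delta> a b) = eps a *\<^sub>C b" using eps_spec by simp
lemma A2: "tlift (\<lambda>p q. p * S q) (D2 \<Delta> a b) = eps b *\<^sub>C a" using eps_spec by simp

lemma act_lin1: "clinear (\<lambda>a. act a x)" using H3 by (simp add: module_algebra_def)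
lemma act_lin2: "clinear (act a)" using H3 by (simp add: module_algebra_def)
lemma act_unital: "\<exists>ps. x = (\<Sum>(a, y)\<leftarrow>ps. act a y)" using H3 by (simp add: module_algebra_def)

lemma uh: "unital_hom \<gamma>" using H4 by (simp add: inner_action_def)
lemma homG: "hom_to_mult (*) \<gamma>" using uh by (simp add: unital_hom_def)
lemma multG: "is_mult (*) (\<gamma> a)" using homG by (simp add: hom_to_mult_def)
lemma G_add: "\<gamma> (a + b) = madd (\<gamma> a) (\<gamma> b)" using homG by (simp add: hom_to_mult_def)
lemma G_scale: "\<gamma> (c *\<^sub>C a) = mscale c (\<gamma> a)" using homG by (simp add: hom_to_mult_def)
lemma G_mult: "\<gamma> (a * b) = mcomp (\<gamma> a) (\<gamma> b)" using homG by (simp add: hom_to_mult_def)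
lemma unitL: "\<exists>ps. x = (\<Sum>(e, y)\<leftarrow>ps. fst (\<gamma> e) y)" using uh by (simp add: unital_hom_def)
lemma unitR: "\<exists>ps. x = (\<Sum>(e, y)\<leftarrow>ps. snd (\<gamma> e) y)" using uh by (simp add: unital_hom_def)
lemma inner: "fst (\<gamma> e) x = x \<Longrightarrow> act a x = tlift (\<lambda>p q. snd (\<gamma> (S q)) (fst (\<gamma> p) x)) (D3 \<Delta> a e)"
  using H4 by (simp add: inner_action_def)

lemma lin_gs_x: "clinear (\<lambda>p. snd (\<gamma> p) x)"
  by (rule clinearI) (simp_all add: G_add G_scale madd_def mscale_def)
lemma lin_gf_x: "clinear (\<lambda>p. fst (\<gamma> p) x)"
  by (rule clinearI) (simp_all add: G_add G_scale madd_def mscale_def)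
lemma lin_gs: "clinear (snd (\<gamma> p))" by (rule is_multR_snd_lin[OF ndR multG])
lemma lin_gf: "clinear (fst (\<gamma> p))" by (rule is_multR_fst_lin[OF ndR multG])
lemma gs_mult: "snd (\<gamma> (p * q)) x = snd (\<gamma> q) (snd (\<gamma> p) x)" by (simp add: G_mult mcomp_def)
lemma gf_mult: "fst (\<gamma> (p * q)) x = fst (\<gamma> p) (fst (\<gamma> q) x)" by (simp add: G_mult mcomp_def)
lemma g_comm: "fst (\<gamma> p) (snd (\<gamma> q) y) = snd (\<gamma> q) (fst (\<gamma> p) y)"
  by (rule is_multR_comm[OF ndR multG multG])
lemma gs_mul: "snd (\<gamma> p) (x * z) = x * snd (\<gamma> p) z" using multG by (simp add: is_mult_def)
lemma gs_mul_fst: "snd (\<gamma> u) x * z = x * fst (\<gamma> u) z" using multG by (simp add: is_mult_def)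

lemma lin_gs_c: "clinear f \<Longrightarrow> clinear (\<lambda>x. snd (\<gamma> p) (f x))" by (rule lin_comp[OF lin_gs])
lemma lin_gf_c: "clinear f \<Longrightarrow> clinear (\<lambda>x. fst (\<gamma> p) (f x))" by (rule lin_comp[OF lin_gf])
lemma lin_gs_xc: "clinear f \<Longrightarrow> clinear (\<lambda>x. snd (\<gamma> (f x)) z)" by (rule lin_comp[OF lin_gs_x])
lemma lin_gf_xc: "clinear f \<Longrightarrow> clinear (\<lambda>x. fst (\<gamma> (f x)) z)" by (rule lin_comp[OF lin_gf_x])
lemma lin_S_c: "clinear f \<Longrightarrow> clinear (\<lambda>x. S (f x))" by (rule lin_comp[OF S_lin])
lemma lin_eps_c: "clinear f \<Longrightarrow> clinear (\<lambda>x. eps (f x))" by (rule lin_comp[OF eps_lin])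
lemma lin_act1_c: "clinear f \<Longrightarrow> clinear (\<lambda>x. act (f x) z)" by (rule lin_comp[OF act_lin1])
lemma lin_act2_c: "clinear f \<Longrightarrow> clinear (\<lambda>x. act a (f x))" by (rule lin_comp[OF act_lin2])
lemma lin_D1a: "clinear f \<Longrightarrow> clinear (\<lambda>x. D1 \<Delta> (f x) b)" by (rule lin_comp[OF D1_lin1])
lemma lin_D1b: "clinear f \<Longrightarrow> clinear (\<lambda>x. D1 \<Delta> a (f x))" by (rule lin_comp[OF D1_lin2])
lemma lin_D2a: "clinear f \<Longrightarrow> clinear (\<lambda>x. D2 \<Delta> (f x) b)" by (rule lin_comp[OF D2_lin1])
lemma lin_D2b: "clinear f \<Longrightarrow> clinear (\<lambda>x. D2 \<Delta> a (f x))" by (rule lin_comp[OF D2_lin2])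
lemma lin_D3a: "clinear f \<Longrightarrow> clinear (\<lambda>x. D3 \<Delta> (f x) b)" by (rule lin_comp[OF D3_lin1])
lemma lin_D3b: "clinear f \<Longrightarrow> clinear (\<lambda>x. D3 \<Delta> a (f x))" by (rule lin_comp[OF D3_lin2])
lemma lin_lm1_c: "clinear f \<Longrightarrow> clinear (\<lambda>x. lm1 e (f x))" by (rule lin_comp[OF clinear_lm1])
lemma lin_rm1_c: "clinear f \<Longrightarrow> clinear (\<lambda>x. rm1 e (f x))" by (rule lin_comp[OF clinear_rm1])
lemma lin_rm2_c: "clinear f \<Longrightarrow> clinear (\<lambda>x. rm2 e (f x))" by (rule lin_comp[OF clinear_rm2])
lemma lin_rm1p_c: "clinear f \<Longrightarrow> clinear (\<lambda>x. rm1 (f x) v)" by (rule lin_comp[OF lin_rm1_param])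
lemma lin_rm2p_c: "clinear f \<Longrightarrow> clinear (\<lambda>x. rm2 (f x) v)" by (rule lin_comp[OF lin_rm2_param])

lemmas linI = lin_id lin_tlift_fun lin_tlift_arg bilI lin_tens_r lin_tens_l lin_mult_r lin_mult_l
  lin_scale lin_cscale lin_gs_c lin_gf_c lin_gs_xc lin_gf_xc lin_S_c lin_eps_c lin_act1_c lin_act2_c
  lin_D1a lin_D1b lin_D2a lin_D2b lin_D3a lin_D3b lin_lm1_c lin_rm1_c lin_rm2_c lin_rm1p_c lin_rm2p_c

lemma bil_epsq: "bil (\<lambda>p q. eps q *\<^sub>C p)" by (intro linI eps_lin)

lemma C3: "tlift (\<lambda>p q. eps q *\<^sub>C p) (D3 \<Delta> u f) = u * f"
proof (rule nondeg_right_eq[OF ndA])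
  fix e
  have "e * tlift (\<lambda>p q. eps q *\<^sub>C p) (D3 \<Delta> u f) = tlift (\<lambda>p q. eps q *\<^sub>C (e * p)) (D3 \<Delta> u f)"
    by (simp add: tlift_fun_linear[OF lin_mul_left] scaleC_mult_right)
  also have "\<dots> = tlift (\<lambda>p q. eps q *\<^sub>C p) (lm1 e (D3 \<Delta> u f))"
    by (simp add: tlift_lm1[OF bil_epsq])
  also have "\<dots> = tlift (\<lambda>p q. eps q *\<^sub>C (p * f)) (D2 \<Delta> e u)"
    by (simp add: id_a' tlift_rm1[OF bil_epsq])
  also have "\<dots> = tlift (\<lambda>p q. eps q *\<^sub>C p) (D2 \<Delta> e u) * f"
    by (simp add: tlift_fun_linear[OF lin_mul_right] scaleC_mult_left)
  also have "\<dots> = e * (u * f)" by (simp add: C2 mult.assoc)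
  finally show "e * tlift (\<lambda>p q. eps q *\<^sub>C p) (D3 \<Delta> u f) = e * (u * f)" .
qed

lemma coassoc': "tlift (\<lambda>p q. D2 \<Delta> a p \<otimes> q) (D1 \<Delta> b c) =
   tlift (\<lambda>u v. tlift (\<lambda>y z. (u \<otimes> y) \<otimes> z) (D1 \<Delta> v c)) (D2 \<Delta> a b)"
  using coassoc[of a b c] by (simp add: tassoc_nest)

end


lemma tlift_nest_tens: "bil \<Theta> \<Longrightarrow> tlift \<Theta> (tlift (\<lambda>a b. F a b \<otimes> G a b) t) = tlift (\<lambda>a b. \<Theta> (F a b) (G a b)) t"
  by (simp add: tlift_fun_linear[OF clinear_tlift] tlift_tens)

context setting
begin

lemma CV: "tlift (\<lambda>\<alpha> \<beta>. D3 \<Delta> \<alpha> f \<otimes> \<beta>) (D1 \<Delta> u w) =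
  tlift (\<lambda>a v. tlift (\<lambda>y z. (a \<otimes> y) \<otimes> z) (D1 \<Delta> v w)) (D3 \<Delta> u f)"
proof (rule nondeg_lm3_eq[OF ndA])
  fix e
  define \<Psi> where "\<Psi> = (\<lambda>(a::'a) v. tlift (\<lambda>y z. (a \<otimes> y) \<otimes> z) (D1 \<Delta> v w))"
  have b\<Psi>: "bil \<Psi>" unfolding \<Psi>_def by (intro linI bil_assoc_inner)
  have "lm3 e (tlift (\<lambda>\<alpha> \<beta>. D3 \<Delta> \<alpha> f \<otimes> \<beta>) (D1 \<Delta> u w)) = tlift (\<lambda>\<alpha> \<beta>. rm1 f (D2 \<Delta> e \<alpha>) \<otimes> \<beta>) (D1 \<Delta> u w)"
    by (simp add: tlift_fun_linear[OF clinear_lm3] id_a')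
  also have "\<dots> = rm3 f (tlift (\<lambda>\<alpha> \<beta>. D2 \<Delta> e \<alpha> \<otimes> \<beta>) (D1 \<Delta> u w))"
    by (simp add: tlift_fun_linear[OF clinear_rm3])
  also have "\<dots> = rm3 f (tlift \<Psi> (D2 \<Delta> e u))"
    by (simp add: coassoc' \<Psi>_def)
  also have "\<dots> = tlift (\<lambda>a v. \<Psi> (a * f) v) (D2 \<Delta> e u)"
    by (simp add: \<Psi>_def tlift_fun_linear[OF clinear_rm3])
  finally have L: "lm3 e (tlift (\<lambda>\<alpha> \<beta>. D3 \<Delta> \<alpha> f \<otimes> \<beta>) (D1 \<Delta> u w)) = tlift (\<lambda>a v. \<Psi> (a * f) v) (D2 \<Delta> e u)" .
  have "lm3 e (tlift \<Psi> (D3 \<Delta> u f)) = tlift (\<lambda>a v. \<Psi> (e * a) v) (D3 \<Delta> u f)"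
    by (simp add: \<Psi>_def tlift_fun_linear[OF clinear_lm3])
  also have "\<dots> = tlift \<Psi> (lm1 e (D3 \<Delta> u f))"
    by (simp add: tlift_lm1[OF b\<Psi>])
  also have "\<dots> = tlift (\<lambda>a v. \<Psi> (a * f) v) (D2 \<Delta> e u)"
    by (simp add: id_a' tlift_rm1[OF b\<Psi>])
  finally show "lm3 e (tlift (\<lambda>\<alpha> \<beta>. D3 \<Delta> \<alpha> f \<otimes> \<beta>) (D1 \<Delta> u w)) =
      lm3 e (tlift (\<lambda>a v. tlift (\<lambda>y z. (a \<otimes> y) \<otimes> z) (D1 \<Delta> v w)) (D3 \<Delta> u f))"
    using L by (simp add: \<Psi>_def)
qed

lemma Z2: "tlift (\<lambda>\<alpha> \<beta>. tlift (\<lambda>a b. a \<otimes> (S b * \<beta>)) (D3 \<Delta> \<alpha> f)) (D1 \<Delta> u w) = (u * f) \<otimes> w"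
proof -
  define \<Theta> where "\<Theta> = (\<lambda>(X::('a,'a) tensor) \<beta>. tlift (\<lambda>a b. a \<otimes> (S b * \<beta>)) X)"
  have bi: "bil (\<lambda>a b. a \<otimes> (S b * \<beta>))" for \<beta> by (intro linI S_lin)
  have b\<Theta>: "bil \<Theta>" unfolding \<Theta>_def by (intro linI S_lin)
  have "tlift (\<lambda>\<alpha> \<beta>. tlift (\<lambda>a b. a \<otimes> (S b * \<beta>)) (D3 \<Delta> \<alpha> f)) (D1 \<Delta> u w)
      = tlift \<Theta> (tlift (\<lambda>\<alpha> \<beta>. D3 \<Delta> \<alpha> f \<otimes> \<beta>) (D1 \<Delta> u w))"
    by (simp add: tlift_nest_tens[OF b\<Theta>]) (simp add: \<Theta>_def)
  also have "\<dots> = tlift \<Theta> (tlift (\<lambda>a v. tlift (\<lambda>y z. (a \<otimes> y) \<otimes> z) (D1 \<Delta> v w)) (D3 \<Delta> u f))"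
    by (simp add: CV)
  also have "\<dots> = tlift (\<lambda>a v. tlift (\<lambda>y z. a \<otimes> (S y * z)) (D1 \<Delta> v w)) (D3 \<Delta> u f)"
    by (simp add: tlift_fun_linear[OF clinear_tlift[OF b\<Theta>]] tlift_tens[OF b\<Theta>]) (simp add: \<Theta>_def tlift_tens[OF bi])
  also have "\<dots> = tlift (\<lambda>a v. a \<otimes> tlift (\<lambda>y z. S y * z) (D1 \<Delta> v w)) (D3 \<Delta> u f)"
    by (simp add: tlift_fun_linear[OF clinear_tens_right])
  also have "\<dots> = tlift (\<lambda>a v. (eps v *\<^sub>C a) \<otimes> w) (D3 \<Delta> u f)"
    by (simp add: A1 tens_scale_left tens_scale_right)
  also have "\<dots> = tlift (\<lambda>a v. eps v *\<^sub>C a) (D3 \<Delta> u f) \<otimes> w"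
    by (simp add: tlift_fun_linear[OF clinear_tens_left])
  also have "\<dots> = (u * f) \<otimes> w" by (simp add: C3)
  finally show ?thesis .
qed

lemma CR:
  assumes unit: "fst (\<gamma> f) y = y"
  shows "tlift (\<lambda>\<alpha> \<beta>. snd (\<gamma> \<beta>) (act \<alpha> y)) (D1 \<Delta> u w) = snd (\<gamma> w) (fst (\<gamma> u) y)"
proof -
  define \<Omega> where "\<Omega> = tlift (\<lambda>a b. snd (\<gamma> b) (fst (\<gamma> a) y))"
  have b\<Omega>: "bil (\<lambda>a b. snd (\<gamma> b) (fst (\<gamma> a) y))" by (intro linI lin_gs_x lin_gf_x lin_id)
  have "tlift (\<lambda>\<alpha> \<beta>. snd (\<gamma> \<beta>) (act \<alpha> y)) (D1 \<Delta> u w)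
      = tlift (\<lambda>\<alpha> \<beta>. tlift (\<lambda>a b. snd (\<gamma> (S b * \<beta>)) (fst (\<gamma> a) y)) (D3 \<Delta> \<alpha> f)) (D1 \<Delta> u w)"
    by (simp add: inner[OF unit] tlift_fun_linear[OF lin_gs] gs_mult)
  also have "\<dots> = \<Omega> (tlift (\<lambda>\<alpha> \<beta>. tlift (\<lambda>a b. a \<otimes> (S b * \<beta>)) (D3 \<Delta> \<alpha> f)) (D1 \<Delta> u w))"
    by (simp add: \<Omega>_def tlift_fun_linear[OF clinear_tlift[OF b\<Omega>]] tlift_tens[OF b\<Omega>])
  also have "\<dots> = snd (\<gamma> w) (fst (\<gamma> u) y)"
    by (simp add: Z2 \<Omega>_def tlift_tens[OF b\<Omega>] gf_mult unit)
  finally show ?thesis .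
qed

lemma C3B: "tlift (\<lambda>q r. tlift (\<lambda>y z. (q \<otimes> y) \<otimes> z) (D1 \<Delta> r b)) (D1 \<Delta> p c) =
  tlift (\<lambda>g d. tlift (\<lambda>u v. D1 \<Delta> u g \<otimes> v) (D1 \<Delta> p d)) (D1 \<Delta> c b)"
proof (rule nondeg_lm3_eq[OF ndA])
  fix e
  define \<Psi> where "\<Psi> = (\<lambda>(q::'a) r. tlift (\<lambda>y z. (q \<otimes> y) \<otimes> z) (D1 \<Delta> r b))"
  have b\<Psi>: "bil \<Psi>" unfolding \<Psi>_def by (intro linI bil_assoc_inner)
  have "lm3 e (tlift \<Psi> (D1 \<Delta> p c)) = tlift (\<lambda>q r. \<Psi> (e * q) r) (D1 \<Delta> p c)"
    by (simp add: \<Psi>_def tlift_fun_linear[OF clinear_lm3])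
  also have "\<dots> = tlift \<Psi> (lm1 e (D1 \<Delta> p c))"
    by (simp add: tlift_lm1[OF b\<Psi>])
  also have "\<dots> = tlift (\<lambda>q r. \<Psi> q (r * c)) (D2 \<Delta> e p)"
    by (simp add: id_a tlift_rm2[OF b\<Psi>])
  also have "\<dots> = tlift (\<lambda>q r. tlift (\<lambda>g d. tlift (\<lambda>y z. (q \<otimes> (y * g)) \<otimes> z) (D1 \<Delta> r d)) (D1 \<Delta> c b)) (D2 \<Delta> e p)"
    by (simp add: \<Psi>_def id_b tlift_fun_linear[OF clinear_tlift[OF bil_assoc_inner]] tlift_rm1[OF bil_assoc_inner])
  also have "\<dots> = tlift (\<lambda>g d. tlift (\<lambda>q r. tlift (\<lambda>y z. (q \<otimes> (y * g)) \<otimes> z) (D1 \<Delta> r d)) (D2 \<Delta> e p)) (D1 \<Delta> c b)"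
    by (rule tlift_swap)
  also have "\<dots> = tlift (\<lambda>g d. mid3 g (tlift (\<lambda>q r. tlift (\<lambda>y z. (q \<otimes> y) \<otimes> z) (D1 \<Delta> r d)) (D2 \<Delta> e p))) (D1 \<Delta> c b)"
    by (simp add: tlift_fun_linear[OF clinear_mid3])
  also have "\<dots> = tlift (\<lambda>g d. tlift (\<lambda>u v. rm2 g (D2 \<Delta> e u) \<otimes> v) (D1 \<Delta> p d)) (D1 \<Delta> c b)"
    by (simp add: coassoc'[symmetric] tlift_fun_linear[OF clinear_mid3])
  also have "\<dots> = lm3 e (tlift (\<lambda>g d. tlift (\<lambda>u v. D1 \<Delta> u g \<otimes> v) (D1 \<Delta> p d)) (D1 \<Delta> c b))"
    by (simp add: tlift_fun_linear[OF clinear_lm3] id_a)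
  finally show "lm3 e (tlift (\<lambda>q r. tlift (\<lambda>y z. (q \<otimes> y) \<otimes> z) (D1 \<Delta> r b)) (D1 \<Delta> p c)) =
      lm3 e (tlift (\<lambda>g d. tlift (\<lambda>u v. D1 \<Delta> u g \<otimes> v) (D1 \<Delta> p d)) (D1 \<Delta> c b))"
    by (simp add: \<Psi>_def)
qed

end


context setting
begin

definition K :: "'r \<Rightarrow> 'a \<Rightarrow> 'a \<Rightarrow> ('r, 'a) tensor" where
  "K x a b = tlift (\<lambda>p q. snd (\<gamma> p) x \<otimes> q) (D1 \<Delta> a b)"

lemma bilK_inner: "bil (\<lambda>p q. snd (\<gamma> p) x \<otimes> q)" by (intro linI lin_gs_x)
lemma K_lin_x: "clinear (\<lambda>x. K x a b)" unfolding K_def by (intro linI lin_gs)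
lemma K_lin_a: "clinear (\<lambda>a. K x a b)" unfolding K_def by (intro linI lin_gs_x)

definition u0 :: "'a \<Rightarrow> 'r \<Rightarrow> 'a \<Rightarrow> ('r, 'a) tensor" where
  "u0 e y a = tlift (\<lambda>p q. snd (\<gamma> p) y \<otimes> q) (D2 \<Delta> e a)"

lemma u0_spec: "rm2 b (u0 e y a) = K (snd (\<gamma> e) y) a b"
proof -
  have "rm2 b (u0 e y a) = tlift (\<lambda>p q. snd (\<gamma> p) y \<otimes> q) (rm2 b (D2 \<Delta> e a))"
    by (simp add: u0_def tlift_fun_linear[OF clinear_rm2] tlift_rm2[OF bilK_inner])
  also have "\<dots> = tlift (\<lambda>p q. snd (\<gamma> p) y \<otimes> q) (lm1 e (D1 \<Delta> a b))"
    by (simp add: id_a)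
  also have "\<dots> = K (snd (\<gamma> e) y) a b"
    by (simp add: tlift_lm1[OF bilK_inner] K_def gs_mult)
  finally show ?thesis .
qed

lemma Phi_exists_list: "\<exists>u. \<forall>b. rm2 b u = K (\<Sum>(e, y)\<leftarrow>ps. snd (\<gamma> e) y) a b"
proof (induction ps)
  case Nil
  show ?case by (rule exI[of _ 0]) (simp add: clinear_zero[OF clinear_rm2] clinear_zero[OF K_lin_x])
next
  case (Cons p ps)
  obtain e y where p: "p = (e, y)" by (cases p) auto
  obtain u where u: "\<forall>b. rm2 b u = K (\<Sum>(e, y)\<leftarrow>ps. snd (\<gamma> e) y) a b" using Cons by blast
  show ?case
    by (rule exI[of _ "u0 e y a + u"])
       (simp add: p u u0_spec clinear_add[OF clinear_rm2] clinear_add[OF K_lin_x])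
qed

lemma Phi_exists: "\<exists>u. \<forall>b. rm2 b u = K x a b"
proof -
  obtain ps where "x = (\<Sum>(e, y)\<leftarrow>ps. snd (\<gamma> e) y)" using unitR by blast
  then show ?thesis using Phi_exists_list by simp
qed

definition Phi0 :: "'r \<Rightarrow> 'a \<Rightarrow> ('r, 'a) tensor" where
  "Phi0 x a = (SOME u. \<forall>b. rm2 b u = K x a b)"

lemma Phi0_spec: "rm2 b (Phi0 x a) = K x a b"
  using someI_ex[OF Phi_exists[of x a]] unfolding Phi0_def by blast

lemma eq_by_rm2:
  fixes u v :: "('r, 'a) tensor"
  assumes "\<And>b. rm2 b u = rm2 b v" shows "u = v"
proof -
  have "u - v = 0"
    by (rule lemmaN[OF ndA]) (simp add: clinear_diff[OF clinear_rm2] assms)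
  then show ?thesis by simp
qed

lemma Phi0_unique: "(\<And>b. rm2 b u = K x a b) \<Longrightarrow> Phi0 x a = u"
  by (rule eq_by_rm2) (simp add: Phi0_spec)

lemma bil_Phi0: "bil Phi0"
proof (rule bilI)
  fix x show "clinear (Phi0 x)"
  proof (rule clinearI)
    fix a a' show "Phi0 x (a + a') = Phi0 x a + Phi0 x a'"
      by (rule Phi0_unique) (simp add: clinear_add[OF clinear_rm2] Phi0_spec clinear_add[OF K_lin_a])
  next
    fix c a show "Phi0 x (c *\<^sub>C a) = c *\<^sub>C Phi0 x a"
      by (rule Phi0_unique) (simp add: clinear_scale[OF clinear_rm2] Phi0_spec clinear_scale[OF K_lin_a])
  qed
next
  fix a show "clinear (\<lambda>x. Phi0 x a)"
  proof (rule clinearI)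
    fix x x' show "Phi0 (x + x') a = Phi0 x a + Phi0 x' a"
      by (rule Phi0_unique) (simp add: clinear_add[OF clinear_rm2] Phi0_spec clinear_add[OF K_lin_x])
  next
    fix c x show "Phi0 (c *\<^sub>C x) a = c *\<^sub>C Phi0 x a"
      by (rule Phi0_unique) (simp add: clinear_scale[OF clinear_rm2] Phi0_spec clinear_scale[OF K_lin_x])
  qed
qed

definition Phi :: "('r, 'a) tensor \<Rightarrow> ('r, 'a) tensor" where "Phi = tlift Phi0"

lemma clinear_Phi: "clinear Phi" unfolding Phi_def by (rule clinear_tlift[OF bil_Phi0])
lemma Phi_tens: "Phi (x \<otimes> a) = Phi0 x a" unfolding Phi_def by (rule tlift_tens[OF bil_Phi0])
lemma Phi_gamma: "Phi0 (snd (\<gamma> e) y) a = u0 e y a"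
  by (rule Phi0_unique) (simp add: u0_spec)

lemma bilK: "bil (\<lambda>x a. K x a b)" by (simp add: bil_def K_lin_x K_lin_a)

lemma rm2_Phi: "rm2 b (Phi t) = tlift (\<lambda>x a. K x a b) t"
  by (simp add: Phi_def tlift_fun_linear[OF clinear_rm2] Phi0_spec)

lemma unitR_ext:
  assumes "clinear F" "clinear H" "\<And>e y. F (snd (\<gamma> e) y) = H (snd (\<gamma> e) y)"
  shows "F x = H x"
proof -
  obtain ps where x: "x = (\<Sum>(e, y)\<leftarrow>ps. snd (\<gamma> e) y)" using unitR by blast
  have "F (\<Sum>(e, y)\<leftarrow>ps. snd (\<gamma> e) y) = H (\<Sum>(e, y)\<leftarrow>ps. snd (\<gamma> e) y)" for ps
    by (induction ps)
       (auto simp: clinear_zero[OF assms(1)] clinear_zero[OF assms(2)] clinear_add[OF assms(1)]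
         clinear_add[OF assms(2)] assms(3))
  then show ?thesis using x by simp
qed

section \<open>Injectivity\<close>

definition G :: "'a \<Rightarrow> ('r, 'a) tensor \<Rightarrow> ('r, 'a) tensor" where
  "G b = tlift (\<lambda>z q. tlift (\<lambda>r s. snd (\<gamma> (S r)) z \<otimes> s) (D1 \<Delta> q b))"

lemma bil_G_inner: "bil (\<lambda>z q. tlift (\<lambda>r s. snd (\<gamma> (S r)) z \<otimes> s) (D1 \<Delta> q b))"
  by (intro linI lin_gs_x lin_gs S_lin)

lemma clinear_G: "clinear (G b)" unfolding G_def by (rule clinear_tlift[OF bil_G_inner])

lemma G_Phi_elem: "G b (Phi (snd (\<gamma> e) y \<otimes> a)) = rm2 b (snd (\<gamma> e) y \<otimes> a)"
proof -
  define \<Theta> where "\<Theta> = (\<lambda>(X::('a, 'a) tensor) (s::'a). tlift (\<lambda>p r. snd (\<gamma> (p * S r)) y) X \<otimes> s)"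
  have bi: "bil (\<lambda>p r. snd (\<gamma> (p * S r)) y)" by (intro linI lin_gs_x S_lin)
  have b\<Theta>: "bil \<Theta>" unfolding \<Theta>_def by (intro linI clinear_tlift[OF bi])
  have "G b (Phi (snd (\<gamma> e) y \<otimes> a)) = tlift (\<lambda>p q. tlift (\<lambda>r s. snd (\<gamma> (p * S r)) y \<otimes> s) (D1 \<Delta> q b)) (D2 \<Delta> e a)"
    by (simp add: Phi_tens Phi_gamma u0_def G_def tlift_fun_linear[OF clinear_tlift[OF bil_G_inner]]
        tlift_tens[OF bil_G_inner] gs_mult)
  also have "\<dots> = tlift \<Theta> (tlift (\<lambda>u v. tlift (\<lambda>y z. (u \<otimes> y) \<otimes> z) (D1 \<Delta> v b)) (D2 \<Delta> e a))"
    by (simp add: tlift_fun_linear[OF clinear_tlift[OF b\<Theta>]] tlift_tens[OF b\<Theta>])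
       (simp add: \<Theta>_def tlift_tens[OF bi])
  also have "\<dots> = tlift \<Theta> (tlift (\<lambda>p q. D2 \<Delta> e p \<otimes> q) (D1 \<Delta> a b))"
    by (simp add: coassoc')
  also have "\<dots> = tlift (\<lambda>p q. tlift (\<lambda>p' r. snd (\<gamma> (p' * S r)) y) (D2 \<Delta> e p) \<otimes> q) (D1 \<Delta> a b)"
    by (simp add: tlift_nest_tens[OF b\<Theta>]) (simp add: \<Theta>_def)
  also have "\<dots> = tlift (\<lambda>p q. snd (\<gamma> (tlift (\<lambda>p' r. p' * S r) (D2 \<Delta> e p))) y \<otimes> q) (D1 \<Delta> a b)"
    by (simp add: tlift_fun_linear[OF lin_gs_x])
  also have "\<dots> = tlift (\<lambda>p q. snd (\<gamma> e) y \<otimes> (eps p *\<^sub>C q)) (D1 \<Delta> a b)"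
    by (simp add: A2 G_scale mscale_def tens_scale_left tens_scale_right)
  also have "\<dots> = snd (\<gamma> e) y \<otimes> (a * b)"
    by (simp add: tlift_fun_linear[OF clinear_tens_right, symmetric] C1)
  finally show ?thesis by simp
qed

lemma G_Phi: "G b (Phi t) = rm2 b t"
proof (rule lin_ext[OF lin_comp[OF clinear_G clinear_Phi] clinear_rm2])
  fix x a
  show "G b (Phi (x \<otimes> a)) = rm2 b (x \<otimes> a)"
    by (rule unitR_ext[where F="\<lambda>x. G b (Phi (x \<otimes> a))" and H="\<lambda>x. rm2 b (x \<otimes> a)"])
       (simp_all add: lin_comp[OF clinear_G lin_comp[OF clinear_Phi clinear_tens_left]]
         lin_comp[OF clinear_rm2 clinear_tens_left] G_Phi_elem clinear_tens_left)
qed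

lemma inj_Phi: "inj Phi"
proof (rule injI)
  fix s t assume h: "Phi s = Phi t"
  show "s = t"
    by (rule eq_by_rm2) (metis G_Phi h)
qed

section \<open>Surjectivity\<close>

lemma Phi_range_elem: "\<exists>s. Phi s = snd (\<gamma> p) y \<otimes> q"
proof -
  obtain w where w: "tlift (D2 \<Delta>) w = p \<otimes> q" using bijD2 by (metis bij_pointE)
  have "Phi (tlift (\<lambda>e a. snd (\<gamma> e) y \<otimes> a) w) = tlift (\<lambda>e a. u0 e y a) w"
    by (simp add: tlift_fun_linear[OF clinear_Phi] Phi_tens Phi_gamma)
  also have "\<dots> = tlift (\<lambda>p q. snd (\<gamma> p) y \<otimes> q) (tlift (D2 \<Delta>) w)"
    by (simp add: u0_def tlift_fun_linear[OF clinear_tlift[OF bilK_inner]])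
  also have "\<dots> = snd (\<gamma> p) y \<otimes> q" by (simp add: w tlift_tens[OF bilK_inner])
  finally show ?thesis by blast
qed

lemma surj_Phi: "surj Phi"
proof -
  have addR: "\<exists>s. Phi s = t1 + t2" if "\<exists>s. Phi s = t1" "\<exists>s. Phi s = t2" for t1 t2
    using that clinear_add[OF clinear_Phi] by metis
  have elem: "\<exists>s. Phi s = x \<otimes> q" for x q
  proof -
    obtain ps where x: "x = (\<Sum>(e, y)\<leftarrow>ps. snd (\<gamma> e) y)" using unitR by blast
    have "\<exists>s. Phi s = (\<Sum>(e, y)\<leftarrow>ps. snd (\<gamma> e) y) \<otimes> q" for ps
    proof (induction ps)
      case Nil
      show ?case by (rule exI[of _ 0]) (simp add: clinear_zero[OF clinear_Phi] tens_zero_left)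
    next
      case (Cons p ps)
      then show ?case using addR Phi_range_elem by (cases p) (simp add: tens_add_left)
    qed
    then show ?thesis using x by simp
  qed
  have "\<exists>s. Phi s = t" for t
  proof (induction t rule: tensor_induct)
    case zero
    show ?case by (rule exI[of _ 0]) (rule clinear_zero[OF clinear_Phi])
  next
    case (tens x y)
    show ?case by (rule elem)
  next
    case (add s t)
    then show ?case by (rule addR)
  qed
  then show ?thesis by (metis surjI)
qed

lemma bij_Phi: "bij Phi" by (simp add: bij_def inj_Phi surj_Phi)

end


lemma sl2_rm1: "clinear g \<Longrightarrow> sl2 g W * d = sl2 g (rm1 d W)"
  by (rule lin_ext[where L="\<lambda>W. sl2 g W * d" and M="\<lambda>W. sl2 g (rm1 d W)"])
     (simp_all add: lin_mult_l[OF clinear_sl2] lin_comp[OF clinear_sl2 clinear_rm1] sl2_tens scaleC_mult_left)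

lemma sl2_rm2:
  assumes g: "clinear g" shows "sl2 g (rm2 a X) = sl2 (\<lambda>q. g (q * a)) X"
proof -
  have hl: "clinear (\<lambda>q. g (q * a))" by (rule lin_comp[OF g lin_mul_right])
  show ?thesis
    by (rule lin_ext[where L="\<lambda>X. sl2 g (rm2 a X)" and M="\<lambda>X. sl2 (\<lambda>q. g (q * a)) X"])
       (simp_all add: lin_comp[OF clinear_sl2[OF g] clinear_rm2] clinear_sl2[OF hl] sl2_tens[OF g] sl2_tens[OF hl])
qed

lemma sl2_fun_add: "sl2 (\<lambda>q. g q + h q) X = sl2 g X + sl2 h X"
  unfolding sl2_def by (simp add: scaleC_add_left tlift_fun_add)

lemma sl2_fun_zero: "sl2 (\<lambda>q. 0) X = 0"
  unfolding sl2_def by (simp add: cv.scale_zero_left tlift_fun_zero)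

lemma sl2_fun_sum_list: "(\<Sum>p\<leftarrow>xs. sl2 (g p) X) = sl2 (\<lambda>q. \<Sum>p\<leftarrow>xs. g p q) X"
  by (induction xs) (simp_all add: sl2_fun_zero sl2_fun_add)

lemma tlift_decompR: "bil \<phi> \<Longrightarrow> tlift \<phi> (decompR F W) = (\<Sum>b\<in>F. \<phi> b (sl1 (coord b) W))"
  unfolding decompR_def by (simp add: clinear_sum[OF clinear_tlift] tlift_tens)

lemma sum_list_sum_swap: "(\<Sum>p\<leftarrow>xs. \<Sum>b\<in>F. f p b) = (\<Sum>b\<in>F. \<Sum>p\<leftarrow>xs. f p b)"
  by (induction xs) (simp_all add: sum.distrib)

context setting
begin

lemma id_d: "rm1 d (D1 \<Delta> c a) = rm2 a (D3 \<Delta> c d)"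
  by (rule uniq_left[OF ndA]) (simp add: tmul_rm1 tmul_rm2 M1 M3 rm1_rm2)

lemma LUA:
  fixes xs :: "(('a \<Rightarrow> complex) \<times> 'a) list"
  assumes lin: "\<And>p. p \<in> set xs \<Longrightarrow> clinear (fst p)"
    and hyp: "\<And>e. (\<Sum>p\<leftarrow>xs. fst p (e * snd p)) = 0"
  shows "(\<Sum>p\<leftarrow>xs. fst p (snd p)) = 0"
proof (cases "\<forall>c. eps c = 0")
  case True
  have "c * a = 0" for c a :: 'a
  proof -
    have "c * a = tlift (\<lambda>p q. eps p *\<^sub>C q) (D1 \<Delta> c a)" by (simp add: C1)
    also have "\<dots> = tlift (\<lambda>p q. 0) (D1 \<Delta> c a)" using True by (simp add: cv.scale_zero_left)
    also have "\<dots> = 0" by (rule tlift_fun_zero)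
    finally show ?thesis .
  qed
  then have a0: "a = 0" for a :: 'a by (rule nondeg_right[OF ndA])
  have "fst p (snd p) = 0" if "p \<in> set xs" for p
    using clinear_zero[OF lin[OF that]] a0[of "snd p"] by simp
  then show ?thesis by (induction xs) auto
next
  case False
  then obtain c0 where c0: "eps c0 \<noteq> 0" by blast
  define c where "c = inverse (eps c0) *\<^sub>C c0"
  have epsc: "eps c = 1" using c0 by (simp add: c_def clinear_scale[OF eps_lin] scaleC_complex_def)
  define W where "W = (\<lambda>p::('a \<Rightarrow> complex) \<times> 'a. D1 \<Delta> c (snd p))"
  have Z: "(\<Sum>p\<leftarrow>xs. sl2 (\<lambda>q. fst p (h * q)) (W p)) = 0" for h
  proof (rule nondeg_left[OF ndA])
    fix d
    have "(\<Sum>p\<leftarrow>xs. sl2 (\<lambda>q. fst p (h * q)) (W p)) * d = (\<Sum>p\<leftarrow>xs. sl2 (\<lambda>q. fst p (h * q)) (W p) * d)"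
      by (induction xs) (simp_all add: distrib_right)
    also have "\<dots> = (\<Sum>p\<leftarrow>xs. sl2 (\<lambda>q. fst p (h * (q * snd p))) (D3 \<Delta> c d))"
    proof (rule arg_cong[where f=sum_list], rule map_cong[OF refl])
      fix p assume p: "p \<in> set xs"
      have g: "clinear (\<lambda>q. fst p (h * q))" by (rule lin_comp[OF lin[OF p] lin_mul_left])
      show "sl2 (\<lambda>q. fst p (h * q)) (W p) * d = sl2 (\<lambda>q. fst p (h * (q * snd p))) (D3 \<Delta> c d)"
        by (simp add: sl2_rm1[OF g] W_def id_d sl2_rm2[OF g])
    qed
    also have "\<dots> = sl2 (\<lambda>q. \<Sum>p\<leftarrow>xs. fst p (h * (q * snd p))) (D3 \<Delta> c d)"
      by (rule sl2_fun_sum_list)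
    also have "\<dots> = sl2 (\<lambda>q. 0) (D3 \<Delta> c d)"
      using hyp by (simp add: mult.assoc[symmetric])
    also have "\<dots> = 0" by (rule sl2_fun_zero)
    finally show "(\<Sum>p\<leftarrow>xs. sl2 (\<lambda>q. fst p (h * q)) (W p)) * d = 0" .
  qed
  define F where "F = (\<Union>p\<in>set xs. fsupp (W p))"
  have finF: "finite F" by (simp add: F_def finite_fsupp)
  have WF: "decompR F (W p) = W p" if "p \<in> set xs" for p
    by (rule decompR_id[OF finF]) (use that in \<open>auto simp: F_def\<close>)
  have "(\<Sum>p\<leftarrow>xs. fst p (snd p)) = (\<Sum>p\<leftarrow>xs. \<Sum>b\<in>F. coord b (sl2 (\<lambda>q. fst p (S b * q)) (W p)))"
  proof (rule arg_cong[where f=sum_list], rule map_cong[OF refl])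
    fix p assume p: "p \<in> set xs"
    have l: "clinear (fst p)" by (rule lin[OF p])
    have bi: "bil (\<lambda>u q. fst p (S u * q))" by (intro bilI lin_comp[OF l] lin_mult_r lin_mult_l lin_id lin_S_c)
    have hl: "clinear (\<lambda>q. fst p (S b * q))" for b by (rule lin_comp[OF l lin_mul_left])
    have "fst p (snd p) = fst p (eps c *\<^sub>C snd p)" by (simp add: epsc)
    also have "\<dots> = tlift (\<lambda>u q. fst p (S u * q)) (W p)"
      by (simp add: W_def A1[symmetric] tlift_fun_linear[OF l])
    also have "\<dots> = tlift (\<lambda>u q. fst p (S u * q)) (decompR F (W p))" by (simp add: WF[OF p])
    also have "\<dots> = (\<Sum>b\<in>F. fst p (S b * sl1 (coord b) (W p)))" by (simp add: tlift_decompR[OF bi])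
    also have "\<dots> = (\<Sum>b\<in>F. coord b (sl2 (\<lambda>q. fst p (S b * q)) (W p)))"
      by (simp add: slice_swap[OF clinear_coord hl])
    finally show "fst p (snd p) = (\<Sum>b\<in>F. coord b (sl2 (\<lambda>q. fst p (S b * q)) (W p)))" .
  qed
  also have "\<dots> = (\<Sum>b\<in>F. \<Sum>p\<leftarrow>xs. coord b (sl2 (\<lambda>q. fst p (S b * q)) (W p)))"
    by (rule sum_list_sum_swap)
  also have "\<dots> = (\<Sum>b\<in>F. coord b (\<Sum>p\<leftarrow>xs. sl2 (\<lambda>q. fst p (S b * q)) (W p)))"
    by (simp add: clinear_sum_list[OF clinear_coord])
  also have "\<dots> = 0" by (simp add: Z clinear_zero[OF clinear_coord])
  finally show ?thesis .
qed

lemma LU: "\<exists>f. fst (\<gamma> f) y = y"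
proof (rule ccontr)
  assume nex: "\<not> (\<exists>f. fst (\<gamma> f) y = y)"
  define V where "V = range (\<lambda>f. fst (\<gamma> f) y)"
  have sub: "cv.subspace V"
    unfolding V_def
  proof (rule cv.subspaceI)
    show "0 \<in> range (\<lambda>f. fst (\<gamma> f) y)"
      using clinear_zero[OF lin_gf_x, of y] by (metis rangeI)
  next
    fix u v assume "u \<in> range (\<lambda>f. fst (\<gamma> f) y)" "v \<in> range (\<lambda>f. fst (\<gamma> f) y)"
    then obtain f1 f2 where "u = fst (\<gamma> f1) y" "v = fst (\<gamma> f2) y" by blast
    then have "u + v = fst (\<gamma> (f1 + f2)) y" by (simp add: clinear_add[OF lin_gf_x])
    then show "u + v \<in> range (\<lambda>f. fst (\<gamma> f) y)" by (metis rangeI)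
  next
    fix c u assume "u \<in> range (\<lambda>f. fst (\<gamma> f) y)"
    then obtain f1 where "u = fst (\<gamma> f1) y" by blast
    then have "c *\<^sub>C u = fst (\<gamma> (c *\<^sub>C f1)) y" by (simp add: clinear_scale[OF lin_gf_x])
    then show "c *\<^sub>C u \<in> range (\<lambda>f. fst (\<gamma> f) y)" by (metis rangeI)
  qed
  have yV: "y \<notin> V" using nex unfolding V_def by (metis (mono_tags, lifting) imageE)
  obtain B0 where B0: "B0 \<subseteq> V" "cv.independent B0" "V \<subseteq> cv.span B0"
    using cv.maximal_independent_subset[of V] by blast
  have spanB0: "cv.span B0 \<subseteq> V" by (rule cv.span_minimal[OF B0(1) sub])
  have yB0: "y \<notin> cv.span B0" using yV spanB0 by blast
  have ind: "cv.independent (insert y B0)" by (rule cv.independent_insertI[OF yB0 B0(2)])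
  define B where "B = cv.extend_basis (insert y B0)"
  have indB: "cv.independent B" unfolding B_def by (rule cv.independent_extend_basis[OF ind])
  have spanB: "cv.span B = UNIV" unfolding B_def by (rule cv.span_extend_basis[OF ind])
  have supB: "insert y B0 \<subseteq> B" unfolding B_def by (rule cv.extend_basis_superset[OF ind])
  define \<omega> where "\<omega> = (\<lambda>v. cv.representation B v y)"
  have lin\<omega>: "clinear \<omega>" unfolding \<omega>_def
    by (rule clinearI) (simp_all add: cv.representation_add[OF indB] cv.representation_scale[OF indB] spanB scaleC_complex_def)
  have \<omega>y: "\<omega> y = 1" using cv.representation_basis[OF indB, of y] supB by (simp add: \<omega>_def)
  have \<omega>V: "\<omega> v = 0" if "v \<in> V" for v
  proof -
    have vs: "v \<in> cv.span B0" using that B0(3) by blast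
    have "cv.representation B v = cv.representation B0 v"
      by (rule cv.representation_extend[OF indB vs]) (use supB in auto)
    moreover have "cv.representation B0 v y = 0"
      using cv.representation_ne_zero[of B0 v y] yV B0(1) by blast
    ultimately show ?thesis by (simp add: \<omega>_def)
  qed
  obtain ps where yps: "y = (\<Sum>(e, z)\<leftarrow>ps. fst (\<gamma> e) z)" using unitL by blast
  define xs where "xs = map (\<lambda>p. ((\<lambda>a. \<omega> (fst (\<gamma> a) (snd p))), fst p)) ps"
  have lin: "clinear (fst p)" if "p \<in> set xs" for p
    using that by (auto simp: xs_def intro: lin_comp[OF lin\<omega> lin_gf_x])
  have sumL: "L (\<Sum>(e, z)\<leftarrow>ps. fst (\<gamma> e) z) = (\<Sum>p\<leftarrow>ps. L (fst (\<gamma> (fst p)) (snd p)))" if "clinear L" for L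
    by (induction ps) (auto simp: clinear_zero[OF that] clinear_add[OF that])
  have hyp: "(\<Sum>p\<leftarrow>xs. fst p (e * snd p)) = 0" for e
  proof -
    have "(\<Sum>p\<leftarrow>xs. fst p (e * snd p)) = (\<Sum>p\<leftarrow>ps. \<omega> (fst (\<gamma> e) (fst (\<gamma> (fst p)) (snd p))))"
      by (simp add: xs_def gf_mult o_def)
    also have "\<dots> = \<omega> (fst (\<gamma> e) y)"
      using sumL[OF lin_comp[OF lin\<omega> lin_gf]] yps by simp
    also have "\<dots> = 0" by (rule \<omega>V) (simp add: V_def)
    finally show ?thesis .
  qed
  have "(\<Sum>p\<leftarrow>xs. fst p (snd p)) = \<omega> y"
    using sumL[OF lin\<omega>] yps by (simp add: xs_def o_def)
  then have "\<omega> y = 0" using LUA[OF lin hyp] by simp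
  then show False using \<omega>y by simp
qed

end


context setting
begin

lemma bil_smash_inner: "bil (\<lambda>x' a'. tlift (\<lambda>p q. (x * act p x') \<otimes> q) (D1 \<Delta> a a'))"
  by (intro linI act_lin1)

lemma bil_smash_outer: "bil (\<lambda>x a. tlift (\<lambda>x' a'. tlift (\<lambda>p q. (x * act p x') \<otimes> q) (D1 \<Delta> a a')) t)"
  by (intro linI act_lin1)

lemma smash_lin_s: "clinear (\<lambda>s. smash_mul \<Delta> act s t)"
  unfolding smash_mul_def by (rule clinear_tlift[OF bil_smash_outer])

lemma smash_lin_t: "clinear (\<lambda>t. smash_mul \<Delta> act s t)"
  unfolding smash_mul_def by (intro lin_tlift_fun clinear_tlift[OF bil_smash_inner])

lemma smash_elem: "smash_mul \<Delta> act (x \<otimes> a) (y \<otimes> c) = tlift (\<lambda>p q. (x * act p y) \<otimes> q) (D1 \<Delta> a c)"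
  unfolding smash_mul_def by (simp only: tlift_tens[OF bil_smash_outer]) (simp add: tlift_tens[OF bil_smash_inner])

lemma Key:
  assumes unit: "fst (\<gamma> f) y = y"
  shows "tlift (\<lambda>p q. tlift (\<lambda>\<alpha> \<beta>. snd (\<gamma> \<alpha>) (act p y) \<otimes> \<beta>) (D1 \<Delta> q b)) (D1 \<Delta> a c) =
    tlift (\<lambda>g d. tlift (\<lambda>u v. snd (\<gamma> g) (fst (\<gamma> u) y) \<otimes> v) (D1 \<Delta> a d)) (D1 \<Delta> c b)"
proof -
  define \<Theta> where "\<Theta> = (\<lambda>(X::('a, 'a) tensor) (\<delta>::'a). tlift (\<lambda>p \<alpha>. snd (\<gamma> \<alpha>) (act p y)) X \<otimes> \<delta>)"
  have bi: "bil (\<lambda>p \<alpha>. snd (\<gamma> \<alpha>) (act p y))" by (intro linI lin_gs_x act_lin1)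
  have b\<Theta>: "bil \<Theta>" unfolding \<Theta>_def by (intro linI clinear_tlift[OF bi])
  have "tlift (\<lambda>p q. tlift (\<lambda>\<alpha> \<beta>. snd (\<gamma> \<alpha>) (act p y) \<otimes> \<beta>) (D1 \<Delta> q b)) (D1 \<Delta> a c)
      = tlift \<Theta> (tlift (\<lambda>q r. tlift (\<lambda>y z. (q \<otimes> y) \<otimes> z) (D1 \<Delta> r b)) (D1 \<Delta> a c))"
    by (simp add: tlift_fun_linear[OF clinear_tlift[OF b\<Theta>]] tlift_tens[OF b\<Theta>])
       (simp add: \<Theta>_def tlift_tens[OF bi])
  also have "\<dots> = tlift \<Theta> (tlift (\<lambda>g d. tlift (\<lambda>u v. D1 \<Delta> u g \<otimes> v) (D1 \<Delta> a d)) (D1 \<Delta> c b))"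
    by (simp add: C3B)
  also have "\<dots> = tlift (\<lambda>g d. tlift (\<lambda>u v. tlift (\<lambda>p \<alpha>. snd (\<gamma> \<alpha>) (act p y)) (D1 \<Delta> u g) \<otimes> v) (D1 \<Delta> a d)) (D1 \<Delta> c b)"
    by (simp add: tlift_fun_linear[OF clinear_tlift[OF b\<Theta>]] tlift_tens[OF b\<Theta>]) (simp add: \<Theta>_def)
  also have "\<dots> = tlift (\<lambda>g d. tlift (\<lambda>u v. snd (\<gamma> g) (fst (\<gamma> u) y) \<otimes> v) (D1 \<Delta> a d)) (D1 \<Delta> c b)"
    by (simp add: CR[OF unit])
  finally show ?thesis .
qed


lemma mult_elem: "Phi (smash_mul \<Delta> act (x \<otimes> a) (y \<otimes> c)) = tmul (Phi (x \<otimes> a)) (Phi (y \<otimes> c))"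
proof (rule eq_by_rm2)
  fix b
  obtain f where unit: "fst (\<gamma> f) y = y" using LU by blast
  have "rm2 b (Phi (smash_mul \<Delta> act (x \<otimes> a) (y \<otimes> c))) =
      tlift (\<lambda>p q. tlift (\<lambda>\<alpha> \<beta>. snd (\<gamma> \<alpha>) (x * act p y) \<otimes> \<beta>) (D1 \<Delta> q b)) (D1 \<Delta> a c)"
    by (simp add: smash_elem rm2_Phi tlift_nest_tens[OF bilK]) (simp add: K_def)
  also have "\<dots> = lm1 x (tlift (\<lambda>p q. tlift (\<lambda>\<alpha> \<beta>. snd (\<gamma> \<alpha>) (act p y) \<otimes> \<beta>) (D1 \<Delta> q b)) (D1 \<Delta> a c))"
    by (simp add: tlift_fun_linear[OF clinear_lm1] gs_mul)
  also have "\<dots> = lm1 x (tlift (\<lambda>g d. tlift (\<lambda>u v. snd (\<gamma> g) (fst (\<gamma> u) y) \<otimes> v) (D1 \<Delta> a d)) (D1 \<Delta> c b))"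
    by (simp add: Key[OF unit])
  also have "\<dots> = tlift (\<lambda>g d. tlift (\<lambda>u v. (snd (\<gamma> u) x * snd (\<gamma> g) y) \<otimes> v) (D1 \<Delta> a d)) (D1 \<Delta> c b)"
    by (simp add: tlift_fun_linear[OF clinear_lm1] gs_mul_fst g_comm)
  also have "\<dots> = tlift (\<lambda>g d. rm1 (snd (\<gamma> g) y) (rm2 d (Phi0 x a))) (D1 \<Delta> c b)"
    by (simp add: Phi0_spec K_def tlift_fun_linear[OF clinear_rm1])
  also have "\<dots> = tmul (Phi0 x a) (K y c b)"
    by (simp add: K_def tlift_fun_linear[OF clinear_tmul_right] tmul_tens_right)
  also have "\<dots> = rm2 b (tmul (Phi (x \<otimes> a)) (Phi (y \<otimes> c)))"
    by (simp add: Phi_tens tmul_rm2[symmetric] Phi0_spec)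
  finally show "rm2 b (Phi (smash_mul \<Delta> act (x \<otimes> a) (y \<otimes> c))) = rm2 b (tmul (Phi (x \<otimes> a)) (Phi (y \<otimes> c)))" .
qed

lemma Phi_mult: "Phi (smash_mul \<Delta> act s t) = tmul (Phi s) (Phi t)"
  by (rule lin_ext2[where F="\<lambda>s t. Phi (smash_mul \<Delta> act s t)" and G="\<lambda>s t. tmul (Phi s) (Phi t)"])
     (simp_all add: lin_comp[OF clinear_Phi smash_lin_t] lin_comp[OF clinear_tmul_right clinear_Phi]
       lin_comp[OF clinear_Phi smash_lin_s] lin_comp[OF clinear_tmul_left clinear_Phi] mult_elem)

lemma main: "\<exists>\<Phi> :: ('r, 'a) tensor \<Rightarrow> ('r, 'a) tensor.
           clinear \<Phi> \<and> bij \<Phi> \<and> (\<forall>s t. \<Phi> (smash_mul \<Delta> act s t) = tmul (\<Phi> s) (\<Phi> t))"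
  using clinear_Phi bij_Phi Phi_mult by blast

end


theorem proposition5p12:
  fixes \<Delta> :: "'a::calg \<Rightarrow> ('a, 'a) tensor mult"
    and S :: "'a \<Rightarrow> 'a"
    and act :: "'a \<Rightarrow> 'r::calg \<Rightarrow> 'r"
    and \<gamma> :: "'a \<Rightarrow> 'r mult"
  assumes "regular_mult_hopf \<Delta>"
    and "is_antipode \<Delta> S"
    and "module_algebra \<Delta> act"
    and "inner_action \<Delta> S act \<gamma>"
  shows "\<exists>\<Phi> :: ('r, 'a) tensor \<Rightarrow> ('r, 'a) tensor.
           clinear \<Phi> \<and> bij \<Phi> \<and> (\<forall>s t. \<Phi> (smash_mul \<Delta> act s t) = tmul (\<Phi> s) (\<Phi> t))"
proof -
  interpret setting \<Delta> S act \<gamma>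
    by (rule setting.intro) (use assms in auto)
  show ?thesis by (rule main)
qed

end
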